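(* Let $\mathcal{JS}=(\mathcal F,\mathcal F_d,R,\mathcal B)$ be a justification system whose frame is complementary and whose branch evaluation $\mathcal B$ is consistent. Let $\tau$ be a positional (respectively general) strategy for $F$, $x\in\mathcal F_d$, and $n$ the node of $J_\tau(x)$ labelled $\sim x$ (respectively the root node of the tree $J_\tau(x)$, corresponding to the one-state path $x$). Then for every interpretation $\mathcal I$, $$\mathrm{val}(J_\tau(x),n,\mathcal I)=\sim\bigvee_{\sigma\in\mathfrak S_g(T)}u(x,\sigma,\tau).$$
   Context: Let $\mathcal F$ be a set (fact space) containing $\mathcal L=\{\mathbf t,\mathbf f,\mathbf u\}$ with an involution $\sim$ satisfying $\sim\mathbf t=\mathbf f$, $\sim\mathbf u=\mathbf u$, $\sim x\ne x$ for $x\ne\mathbf u$; $\sim A=\{\sim a:a\in A\}$. Truth order $\mathbf f<_t\mathbf u<_t\mathbf t$; $\bigwedge,\bigvee$ are glb/lub in $(\mathcal L,\le_t)$; $\sim$ reverses $\le_t$. A justification frame is $\mathcal{JF}=(\mathcal F,\mathcal F_d,R)$ with $\mathcal F_d\subseteq\mathcal F$, $\sim\mathcal F_d=\mathcal F_d$, $\mathcal F_d\cap\mathcal L=\emptyset$, $R\subseteq\mathcal F_d\times2^{\mathcal F}$ a set of rules $x\gets A$ with nonempty bodies, every $x\in\mathcal F_d$ heading a rule; $\mathcal F_o=\mathcal F\setminus\mathcal F_d$. A selection function for $x\in\mathcal F_d$ assigns to every body $A$ of a rule $x\gets A$ an element $s(A)\in A$; $\mathrm{Im}(s)$ is its image.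 $R^*$ is the set of rules $\sim x\gets\sim\mathrm{Im}(s)$ ($x\in\mathcal F_d$, $s$ a selection function for $x$); the frame is complementary if $R^*=R$. A justification is a directed graph $(N,E)$ with labelling $\ell:N\to\mathcal F$ such that every internal node $n$ has $\ell(n)\in\mathcal F_d$ and $\ell(n)\gets\{\ell(m):(n,m)\in E\}\in R$; locally complete if no leaf is labelled by a defined fact. A $\mathcal{JF}$-branch is an infinite sequence of defined facts or a finite sequence $x_0\to\cdots\to x_k$ ($k\ge1$) with $x_0,\dots,x_{k-1}\in\mathcal F_d$, $x_k\in\mathcal F_o$; $\sim b$ applies $\sim$ elementwise. $B_J(n)$ is the set of label sequences of maximal paths of $J$ starting at node $n$. A branch evaluation $\mathcal B$ maps $\mathcal{JF}$-branches to elements of $\mathcal F$; it is consistent if $\mathcal B(\sim b)=\sim\mathcal B(b)$ for all $b$. An interpretation is $\mathcal I:\mathcal F\to\mathcal L$ with $\mathcal I(\sim x)=\sim\mathcal I(x)$, $\mathcal I(l)=l$ on $\mathcal L$. $\mathrm{val}(J,n,\mathcal I)=\bigwedge_{b\in B_J(n)}\mathcal I(\mathcal B(b))$. Game graph $G_{\mathcal{JF}}$: states $S_T=\mathcal F$ (owned by $T$), $S_F=\{r_{x\gets A}:x\gets A\in R\}$ (owned by $F$), edges $(x,r_{x\gets A})$ and $(r_{x\gets A},y)$ for each rule $x\gets A$, $y\in A$. A play is an infinite path or a finite path ending in a state with no outgoing edge. A general strategy for $P\in\{T,F\}$ maps each finite path whose last state $s\in S_P$ has an outgoing edge to an outgoing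 edge of $s$; positional strategies depend only on the last state; $\mathfrak S_g(P)$ is the set of general strategies. A path $s_0s_1\cdots$ is consistent with a strategy $\rho$ of $P$ if $\rho(s_0\cdots s_i)=(s_i,s_{i+1})$ whenever $s_i\in S_P$ and $s_{i+1}$ exists; $\mathrm{play}(s,\sigma,\tau)$ is the unique play from $s$ consistent with $\sigma$ (for $T$) and $\tau$ (for $F$). For a play $p$, $b_p$ deletes rule symbols; $u(x,\sigma,\tau)=\mathcal I(\mathcal B(b_{\mathrm{play}(x,\sigma,\tau)}))$. The play tree of a general strategy $\rho$ in $x$ has as nodes the finite paths from $x$ consistent with $\rho$, labelled by their last state, with edges to one-step extensions; the play graph of a positional $\rho$ in $x$ is the subgraph of $G_{\mathcal{JF}}$ of states and edges on paths from $x$ consistent with $\rho$. Filtering out rule symbols: delete rule-symbol nodes and add $(n,m)$ whenever $(n,k),(k,m)$ were edges with $k$ a rule-symbol node. For a strategy $\tau$ of $F$, $J_\tau(x)$ is the filtered play graph (positional $\tau$) or filtered play tree (general $\tau$) of $\tau$ in $x$ with every label $y$ replaced by $\sim y$. *)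

theory Defs
  imports Main "HOL-Library.Stream"
begin

datatype tv = TT | FF | UU

fun tv_neg :: "tv \<Rightarrow> tv" where
  "tv_neg TT = FF" | "tv_neg FF = TT" | "tv_neg UU = UU"

fun tv_rank :: "tv \<Rightarrow> nat" where
  "tv_rank FF = 0" | "tv_rank UU = 1" | "tv_rank TT = 2"

definition tv_le :: "tv \<Rightarrow> tv \<Rightarrow> bool" where
  "tv_le a b \<longleftrightarrow> tv_rank a \<le> tv_rank b"

definition tv_Inf :: "tv set \<Rightarrow> tv" where
  "tv_Inf S = (if FF \<in> S then FF else if UU \<in> S then UU else TT)"

definition tv_Sup :: "tv set \<Rightarrow> tv" where
  "tv_Sup S = (if TT \<in> S then TT else if UU \<in> S then UU else FF)"

text \<open>The fact space F is the universe of the type 'f; lit embeds L = {t,f,u}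
  into it and neg is the involution \<sim>.\<close>
definition fact_space :: "('f \<Rightarrow> 'f) \<Rightarrow> (tv \<Rightarrow> 'f) \<Rightarrow> bool" where
  "fact_space neg lit \<longleftrightarrow> inj lit \<and> (\<forall>x. neg (neg x) = x) \<and>
     neg (lit TT) = lit FF \<and> neg (lit UU) = lit UU \<and>
     (\<forall>x. x \<noteq> lit UU \<longrightarrow> neg x \<noteq> x)"

definition just_frame :: "('f \<Rightarrow> 'f) \<Rightarrow> (tv \<Rightarrow> 'f) \<Rightarrow> 'f set \<Rightarrow> ('f \<times> 'f set) set \<Rightarrow> bool" where
  "just_frame neg lit Fd R \<longleftrightarrow> neg ` Fd = Fd \<and> Fd \<inter> range lit = {} \<and>
     (\<forall>(x, A) \<in> R. x \<in> Fd \<and> A \<noteq> {}) \<and> (\<forall>x \<in> Fd. \<exists>A. (x, A) \<in> R)"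

definition selection_fun :: "('f \<times> 'f set) set \<Rightarrow> 'f \<Rightarrow> ('f set \<Rightarrow> 'f) \<Rightarrow> bool" where
  "selection_fun R x s \<longleftrightarrow> (\<forall>A. (x, A) \<in> R \<longrightarrow> s A \<in> A)"

definition sel_image :: "('f \<times> 'f set) set \<Rightarrow> 'f \<Rightarrow> ('f set \<Rightarrow> 'f) \<Rightarrow> 'f set" where
  "sel_image R x s = {s A | A. (x, A) \<in> R}"

definition Rstar :: "('f \<Rightarrow> 'f) \<Rightarrow> 'f set \<Rightarrow> ('f \<times> 'f set) set \<Rightarrow> ('f \<times> 'f set) set" where
  "Rstar neg Fd R = {(neg x, neg ` sel_image R x s) | x s. x \<in> Fd \<and> selection_fun R x s}"

definition complementary :: "('f \<Rightarrow> 'f) \<Rightarrow> 'f set \<Rightarrow> ('f \<times> 'f set) set \<Rightarrow> bool" where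
  "complementary neg Fd R \<longleftrightarrow> Rstar neg Fd R = R"

datatype 'a branch = BFin "'a list" | BInf "'a stream"

definition is_branch :: "'f set \<Rightarrow> 'f branch \<Rightarrow> bool" where
  "is_branch Fd b = (case b of
      BFin xs \<Rightarrow> length xs \<ge> 2 \<and> (\<forall>i < length xs - 1. xs ! i \<in> Fd) \<and> last xs \<notin> Fd
    | BInf s \<Rightarrow> (\<forall>i. s !! i \<in> Fd))"

fun bmap :: "('a \<Rightarrow> 'b) \<Rightarrow> 'a branch \<Rightarrow> 'b branch" where
  "bmap f (BFin xs) = BFin (map f xs)"
| "bmap f (BInf s) = BInf (smap f s)"

definition consistent_be :: "('f \<Rightarrow> 'f) \<Rightarrow> 'f set \<Rightarrow> ('f branch \<Rightarrow> 'f) \<Rightarrow> bool" where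
  "consistent_be neg Fd B \<longleftrightarrow> (\<forall>b. is_branch Fd b \<longrightarrow> B (bmap neg b) = neg (B b))"

definition is_interp :: "('f \<Rightarrow> 'f) \<Rightarrow> (tv \<Rightarrow> 'f) \<Rightarrow> ('f \<Rightarrow> tv) \<Rightarrow> bool" where
  "is_interp neg lit I \<longleftrightarrow> (\<forall>x. I (neg x) = tv_neg (I x)) \<and> (\<forall>l. I (lit l) = l)"

type_synonym ('n, 'l) lgraph = "'n set \<times> ('n \<times> 'n) set \<times> ('n \<Rightarrow> 'l)"

definition BJ :: "('n, 'f) lgraph \<Rightarrow> 'n \<Rightarrow> 'f branch set" where
  "BJ J n = (case J of (N, E, lab) \<Rightarrow>
     {BFin (map lab p) | p. p \<noteq> [] \<and> hd p = n \<and> set p \<subseteq> N \<and>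
        (\<forall>i < length p - 1. (p ! i, p ! Suc i) \<in> E) \<and> \<not> (\<exists>m \<in> N. (last p, m) \<in> E)}
   \<union> {BInf (smap lab p) | p. shd p = n \<and> (\<forall>i. p !! i \<in> N \<and> (p !! i, p !! Suc i) \<in> E)})"

definition val :: "('n, 'f) lgraph \<Rightarrow> 'n \<Rightarrow> ('f branch \<Rightarrow> 'f) \<Rightarrow> ('f \<Rightarrow> tv) \<Rightarrow> tv" where
  "val J n B I = tv_Inf ((\<lambda>b. I (B b)) ` BJ J n)"

datatype 'f state = Fact 'f | Rule 'f "'f set"
datatype player = PlT | PlF

fun owner :: "'f state \<Rightarrow> player" where
  "owner (Fact _) = PlT" | "owner (Rule _ _) = PlF"

fun is_fact :: "'f state \<Rightarrow> bool" where
  "is_fact (Fact _) = True" | "is_fact (Rule _ _) = False"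

fun fact_of :: "'f state \<Rightarrow> 'f" where
  "fact_of (Fact y) = y" | "fact_of (Rule y _) = y"

fun gedge :: "('f \<times> 'f set) set \<Rightarrow> 'f state \<Rightarrow> 'f state \<Rightarrow> bool" where
  "gedge R (Fact y) (Rule y' A) \<longleftrightarrow> y' = y \<and> (y, A) \<in> R"
| "gedge R (Rule y A) (Fact z) \<longleftrightarrow> (y, A) \<in> R \<and> z \<in> A"
| "gedge R _ _ \<longleftrightarrow> False"

definition is_state :: "('f \<times> 'f set) set \<Rightarrow> 'f state \<Rightarrow> bool" where
  "is_state R s \<longleftrightarrow> (case s of Fact _ \<Rightarrow> True | Rule y A \<Rightarrow> (y, A) \<in> R)"

definition has_succ :: "('f \<times> 'f set) set \<Rightarrow> 'f state \<Rightarrow> bool" where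
  "has_succ R s \<longleftrightarrow> (\<exists>s'. gedge R s s')"

definition is_fin_path :: "('f \<times> 'f set) set \<Rightarrow> 'f state list \<Rightarrow> bool" where
  "is_fin_path R p \<longleftrightarrow> p \<noteq> [] \<and> is_state R (hd p) \<and>
     (\<forall>i < length p - 1. gedge R (p ! i) (p ! Suc i))"

text \<open>A strategy is represented by the successor state it chooses (equivalently,
  the outgoing edge to that state).\<close>
definition gen_strategies :: "('f \<times> 'f set) set \<Rightarrow> player \<Rightarrow> ('f state list \<Rightarrow> 'f state) set" where
  "gen_strategies R P = {\<rho>. \<forall>p. is_fin_path R p \<and> owner (last p) = P \<and> has_succ R (last p)
       \<longrightarrow> gedge R (last p) (\<rho> p)}"

definition positional_strategy :: "('f \<times> 'f set) set \<Rightarrow> player \<Rightarrow> ('f state \<Rightarrow> 'f state) \<Rightarrow> bool" where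
  "positional_strategy R P g \<longleftrightarrow> (\<forall>s. is_state R s \<and> owner s = P \<and> has_succ R s \<longrightarrow> gedge R s (g s))"

definition cons_fin :: "player \<Rightarrow> ('f state list \<Rightarrow> 'f state) \<Rightarrow> 'f state list \<Rightarrow> bool" where
  "cons_fin P \<rho> p \<longleftrightarrow> (\<forall>i < length p - 1. owner (p ! i) = P \<longrightarrow> \<rho> (take (Suc i) p) = p ! Suc i)"

definition cons_inf :: "player \<Rightarrow> ('f state list \<Rightarrow> 'f state) \<Rightarrow> 'f state stream \<Rightarrow> bool" where
  "cons_inf P \<rho> p \<longleftrightarrow> (\<forall>i. owner (p !! i) = P \<longrightarrow> \<rho> (stake (Suc i) p) = p !! Suc i)"

definition play :: "('f \<times> 'f set) set \<Rightarrow> 'f state \<Rightarrow> ('f state list \<Rightarrow> 'f state)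
    \<Rightarrow> ('f state list \<Rightarrow> 'f state) \<Rightarrow> 'f state branch" where
  "play R s \<sigma> \<tau> = (THE q.
      (case q of
         BFin p \<Rightarrow> is_fin_path R p \<and> hd p = s \<and> \<not> has_succ R (last p) \<and> cons_fin PlT \<sigma> p \<and> cons_fin PlF \<tau> p
       | BInf p \<Rightarrow> is_state R (shd p) \<and> shd p = s \<and> (\<forall>i. gedge R (p !! i) (p !! Suc i)) \<and>
                   cons_inf PlT \<sigma> p \<and> cons_inf PlF \<tau> p))"

fun del_rules :: "'f state branch \<Rightarrow> 'f branch" where
  "del_rules (BFin p) = BFin (map fact_of (filter is_fact p))"
| "del_rules (BInf p) = BInf (smap fact_of (sfilter is_fact p))"

definition u :: "('f \<times> 'f set) set \<Rightarrow> ('f branch \<Rightarrow> 'f) \<Rightarrow> ('f \<Rightarrow> tv) \<Rightarrow> 'f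
    \<Rightarrow> ('f state list \<Rightarrow> 'f state) \<Rightarrow> ('f state list \<Rightarrow> 'f state) \<Rightarrow> tv" where
  "u R B I x \<sigma> \<tau> = I (B (del_rules (play R (Fact x) \<sigma> \<tau>)))"

definition pos_to_gen :: "('f state \<Rightarrow> 'f state) \<Rightarrow> ('f state list \<Rightarrow> 'f state)" where
  "pos_to_gen g = (\<lambda>p. g (last p))"

text \<open>Finite paths from x consistent with \<rho> (every state/edge on an infinite consistent
  path already lies on a finite consistent prefix).\<close>
definition cons_paths_from :: "('f \<times> 'f set) set \<Rightarrow> player \<Rightarrow> ('f state list \<Rightarrow> 'f state)
    \<Rightarrow> 'f \<Rightarrow> 'f state list set" where
  "cons_paths_from R P \<rho> x = {p. is_fin_path R p \<and> hd p = Fact x \<and> cons_fin P \<rho> p}"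

definition play_graph :: "('f \<times> 'f set) set \<Rightarrow> player \<Rightarrow> ('f state \<Rightarrow> 'f state) \<Rightarrow> 'f
    \<Rightarrow> ('f state, 'f state) lgraph" where
  "play_graph R P g x =
     ({s. \<exists>p \<in> cons_paths_from R P (pos_to_gen g) x. s \<in> set p},
      {(s, s'). \<exists>p \<in> cons_paths_from R P (pos_to_gen g) x. \<exists>i < length p - 1. p ! i = s \<and> p ! Suc i = s'},
      id)"

definition play_tree :: "('f \<times> 'f set) set \<Rightarrow> player \<Rightarrow> ('f state list \<Rightarrow> 'f state) \<Rightarrow> 'f
    \<Rightarrow> ('f state list, 'f state) lgraph" where
  "play_tree R P \<rho> x =
     (cons_paths_from R P \<rho> x,
      {(p, p @ [s]) | p s. p \<in> cons_paths_from R P \<rho> x \<and> p @ [s] \<in> cons_paths_from R P \<rho> x},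
      last)"

definition filter_rules :: "('n, 'f state) lgraph \<Rightarrow> ('n, 'f state) lgraph" where
  "filter_rules J = (case J of (N, E, lab) \<Rightarrow>
     (let N' = {n \<in> N. is_fact (lab n)} in
      (N', {(n, m). n \<in> N' \<and> m \<in> N' \<and>
              ((n, m) \<in> E \<or> (\<exists>k \<in> N. \<not> is_fact (lab k) \<and> (n, k) \<in> E \<and> (k, m) \<in> E))},
       lab)))"

definition neg_labels :: "('f \<Rightarrow> 'f) \<Rightarrow> ('n, 'f state) lgraph \<Rightarrow> ('n, 'f) lgraph" where
  "neg_labels neg J = (case J of (N, E, lab) \<Rightarrow> (N, E, \<lambda>n. neg (fact_of (lab n))))"

definition J_pos :: "('f \<Rightarrow> 'f) \<Rightarrow> ('f \<times> 'f set) set \<Rightarrow> ('f state \<Rightarrow> 'f state) \<Rightarrow> 'f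
    \<Rightarrow> ('f state, 'f) lgraph" where
  "J_pos neg R g x = neg_labels neg (filter_rules (play_graph R PlF g x))"

definition J_gen :: "('f \<Rightarrow> 'f) \<Rightarrow> ('f \<times> 'f set) set \<Rightarrow> ('f state list \<Rightarrow> 'f state) \<Rightarrow> 'f
    \<Rightarrow> ('f state list, 'f) lgraph" where
  "J_gen neg R \<tau> x = neg_labels neg (filter_rules (play_tree R PlF \<tau> x))"

end

theory Submission
  imports Defs
begin


lemma gedge_cases:
  "gedge R s s' \<Longrightarrow> (\<exists>y A. s = Fact y \<and> s' = Rule y A \<and> (y,A)\<in>R) \<or> (\<exists>y A z. s = Rule y A \<and> s' = Fact z \<and> (y,A)\<in>R \<and> z\<in>A)"
  by (cases s; cases s') auto

lemma gedge_flip: "gedge R s s' \<Longrightarrow> is_fact s' \<longleftrightarrow> \<not> is_fact s"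
  by (cases s; cases s') auto

lemma gedge_state: "gedge R s s' \<Longrightarrow> is_state R s'"
  by (cases s; cases s') (auto simp: is_state_def)

lemma gedge_owner: "gedge R s s' \<Longrightarrow> owner s = PlT \<longleftrightarrow> is_fact s"
  by (cases s; cases s') auto

lemma owner_fact: "owner s = PlT \<longleftrightarrow> is_fact s"
  by (cases s) auto

lemma owner_F: "owner s = PlF \<longleftrightarrow> \<not> is_fact s"
  by (cases s) auto

lemma has_succ_Fact: "just_frame neg lit Fd R \<Longrightarrow> has_succ R (Fact y) \<longleftrightarrow> y \<in> Fd"
  unfolding has_succ_def just_frame_def
  apply auto
  subgoal for s' by (cases s') auto
  subgoal by (metis gedge.simps(1))
  done

lemma has_succ_Rule: "just_frame neg lit Fd R \<Longrightarrow> (y,A) \<in> R \<Longrightarrow> has_succ R (Rule y A)"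
proof -
  assume a: "just_frame neg lit Fd R" "(y,A) \<in> R"
  then have "A \<noteq> {}" unfolding just_frame_def by auto
  then obtain z where "z \<in> A" by auto
  then have "gedge R (Rule y A) (Fact z)" using a by simp
  then show ?thesis unfolding has_succ_def by blast
qed

lemma nonfact_succ: "just_frame neg lit Fd R \<Longrightarrow> is_state R s \<Longrightarrow> \<not> is_fact s \<Longrightarrow> has_succ R s"
  by (cases s) (auto simp: is_state_def intro: has_succ_Rule)

lemma fin_path_append:
  assumes "p \<noteq> []"
  shows "is_fin_path R (p @ [a]) \<longleftrightarrow> is_fin_path R p \<and> gedge R (last p) a"
proof -
  define n where "n = length p - 1"
  have L: "length p = Suc n" using assms n_def by simp
  have A: "\<And>i. i < n \<Longrightarrow> (p@[a])!i = p!i \<and> (p@[a])!Suc i = p!Suc i"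
    using L by (simp add: nth_append)
  have B: "(p@[a])!n = last p" "(p@[a])!Suc n = a"
    using L assms by (simp_all add: nth_append last_conv_nth)
  have H: "hd (p@[a]) = hd p" using assms by simp
  have "is_fin_path R (p @ [a]) \<longleftrightarrow> is_state R (hd p) \<and> (\<forall>i<Suc n. gedge R ((p@[a])!i) ((p@[a])!Suc i))"
    unfolding is_fin_path_def using L H by simp
  also have "\<dots> \<longleftrightarrow> is_state R (hd p) \<and> (\<forall>i<n. gedge R ((p@[a])!i) ((p@[a])!Suc i)) \<and> gedge R ((p@[a])!n) ((p@[a])!Suc n)"
    by (simp add: less_Suc_eq conj_commute all_conj_distrib)
  also have "\<dots> \<longleftrightarrow> is_fin_path R p \<and> gedge R (last p) a"
    unfolding is_fin_path_def B using A L assms by auto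
  finally show ?thesis .
qed

lemma cons_fin_append:
  assumes "p \<noteq> []"
  shows "cons_fin P \<rho> (p @ [a]) \<longleftrightarrow> cons_fin P \<rho> p \<and> (owner (last p) = P \<longrightarrow> \<rho> p = a)"
proof -
  define n where "n = length p - 1"
  have L: "length p = Suc n" using assms n_def by simp
  have A: "\<And>i. i < n \<Longrightarrow> (p@[a])!i = p!i \<and> take (Suc i) (p@[a]) = take (Suc i) p \<and> (p@[a])!Suc i = p!Suc i"
    using L by (simp add: nth_append)
  have B: "(p@[a])!n = last p" "take (Suc n) (p@[a]) = p" "(p@[a])!Suc n = a"
    using L assms by (simp_all add: nth_append last_conv_nth)
  have "cons_fin P \<rho> (p @ [a]) \<longleftrightarrow> (\<forall>i<Suc n. owner ((p@[a])!i) = P \<longrightarrow> \<rho> (take (Suc i) (p@[a])) = (p@[a])!Suc i)"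
    unfolding cons_fin_def using L by simp
  also have "\<dots> \<longleftrightarrow> (\<forall>i<n. owner ((p@[a])!i) = P \<longrightarrow> \<rho> (take (Suc i) (p@[a])) = (p@[a])!Suc i) \<and>
       (owner ((p@[a])!n) = P \<longrightarrow> \<rho> (take (Suc n) (p@[a])) = (p@[a])!Suc n)"
    by (simp add: less_Suc_eq conj_commute all_conj_distrib)
  also have "\<dots> \<longleftrightarrow> cons_fin P \<rho> p \<and> (owner (last p) = P \<longrightarrow> \<rho> p = a)"
    unfolding cons_fin_def B using A L by auto
  finally show ?thesis .
qed

lemma fin_path_take:
  assumes "is_fin_path R p" "0 < k"
  shows "is_fin_path R (take k p)"
proof -
  have ne: "take k p \<noteq> []" using assms unfolding is_fin_path_def by simp
  have h: "hd (take k p) = hd p" using assms by (simp add: hd_take)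
  have "\<forall>i < length (take k p) - 1. gedge R (take k p ! i) (take k p ! Suc i)"
  proof (intro allI impI)
    fix i assume "i < length (take k p) - 1"
    then have "i < length p - 1" "Suc i < k" by auto
    then show "gedge R (take k p ! i) (take k p ! Suc i)" using assms unfolding is_fin_path_def by simp
  qed
  then show ?thesis using ne h assms unfolding is_fin_path_def by simp
qed

lemma cons_fin_take:
  assumes "cons_fin P \<rho> p"
  shows "cons_fin P \<rho> (take k p)"
  unfolding cons_fin_def
proof (intro allI impI)
  fix i assume i: "i < length (take k p) - 1" and o: "owner (take k p ! i) = P"
  then have "i < length p - 1" "Suc i < k" by auto
  moreover have "take (Suc i) (take k p) = take (Suc i) p" using \<open>Suc i < k\<close> by (simp add: min_def)
  ultimately show "\<rho> (take (Suc i) (take k p)) = take k p ! Suc i" using assms o unfolding cons_fin_def by simp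
qed

lemma fin_path_state:
  assumes "is_fin_path R p" "i < length p"
  shows "is_state R (p!i)"
proof (cases i)
  case 0 then show ?thesis using assms unfolding is_fin_path_def by (metis hd_conv_nth)
next
  case (Suc j) then have "gedge R (p!j) (p!i)" using assms unfolding is_fin_path_def by auto
  then show ?thesis by (rule gedge_state)
qed

lemma fin_path_alt:
  assumes "is_fin_path R p" "hd p = Fact x" "i < length p"
  shows "is_fact (p!i) \<longleftrightarrow> even i"
  using assms(3)
proof (induction i)
  case 0 then show ?case using assms unfolding is_fin_path_def by (simp add: hd_conv_nth)
next
  case (Suc i)
  then have "gedge R (p!i) (p!Suc i)" using assms unfolding is_fin_path_def by auto
  then show ?case using Suc gedge_flip by force
qed



lemma stream_ext: "(\<And>n. a !! n = b !! n) \<Longrightarrow> a = b"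
  by (metis stream_smap_nats ext)

lemma player_cases: "owner s = PlT \<or> owner s = PlF"
  by (cases s) auto

definition nxt :: "('f state list \<Rightarrow> 'f state) \<Rightarrow> ('f state list \<Rightarrow> 'f state) \<Rightarrow> 'f state list \<Rightarrow> 'f state" where
  "nxt \<sigma> \<tau> p = (if owner (last p) = PlT then \<sigma> p else \<tau> p)"

definition stepl where "stepl \<sigma> \<tau> p = p @ [nxt \<sigma> \<tau> p]"

definition pre where "pre \<sigma> \<tau> s n = (stepl \<sigma> \<tau> ^^ n) [s]"

lemma pre_0[simp]: "pre \<sigma> \<tau> s 0 = [s]" by (simp add: pre_def)
lemma pre_Suc: "pre \<sigma> \<tau> s (Suc n) = pre \<sigma> \<tau> s n @ [nxt \<sigma> \<tau> (pre \<sigma> \<tau> s n)]"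
  by (simp add: pre_def stepl_def)

lemma pre_len[simp]: "length (pre \<sigma> \<tau> s n) = Suc n"
  by (induction n) (simp_all add: pre_Suc)

lemma pre_ne[simp]: "pre \<sigma> \<tau> s n \<noteq> []"
  using pre_len[of \<sigma> \<tau> s n] by (metis length_0_conv nat.distinct(1))

lemma pre_hd[simp]: "hd (pre \<sigma> \<tau> s n) = s"
  by (induction n) (simp_all add: pre_Suc)

lemma pre_take: "i \<le> n \<Longrightarrow> take (Suc i) (pre \<sigma> \<tau> s n) = pre \<sigma> \<tau> s i"
proof (induction n)
  case 0 then show ?case by simp
next
  case (Suc n)
  show ?case
  proof (cases "i = Suc n")
    case True then show ?thesis by simp
  next
    case False then have "i \<le> n" using Suc by simp
    then show ?thesis using Suc by (simp add: pre_Suc)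
  qed
qed

lemma last_take_Suc: "i < length p \<Longrightarrow> last (take (Suc i) p) = p ! i"
  by (simp add: take_Suc_conv_app_nth)

lemma pre_nth: "i \<le> n \<Longrightarrow> pre \<sigma> \<tau> s n ! i = last (pre \<sigma> \<tau> s i)"
  by (metis last_take_Suc le_imp_less_Suc pre_len pre_take)

lemma last_pre_Suc: "last (pre \<sigma> \<tau> s (Suc n)) = nxt \<sigma> \<tau> (pre \<sigma> \<tau> s n)"
  by (simp add: pre_Suc)

definition ppred where
  "ppred R s \<sigma> \<tau> q = (case q of
         BFin p \<Rightarrow> is_fin_path R p \<and> hd p = s \<and> \<not> has_succ R (last p) \<and> cons_fin PlT \<sigma> p \<and> cons_fin PlF \<tau> p
       | BInf p \<Rightarrow> is_state R (shd p) \<and> shd p = s \<and> (\<forall>i. gedge R (p !! i) (p !! Suc i)) \<and>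
                   cons_inf PlT \<sigma> p \<and> cons_inf PlF \<tau> p)"

lemma play_ppred_def: "play R s \<sigma> \<tau> = (THE q. ppred R s \<sigma> \<tau> q)"
  by (simp add: play_def ppred_def)

lemma nxt_cons:
  assumes "cons_fin PlT \<sigma> p" "cons_fin PlF \<tau> p" "Suc i < length p"
  shows "p ! Suc i = nxt \<sigma> \<tau> (take (Suc i) p)"
proof -
  have l: "last (take (Suc i) p) = p ! i" using assms by (simp add: last_take_Suc)
  have i: "i < length p - 1" using assms by simp
  show ?thesis
  proof (cases "owner (p!i) = PlT")
    case True then show ?thesis using assms(1) i l unfolding cons_fin_def nxt_def by simp
  next
    case False then have "owner (p!i) = PlF" using player_cases by blast
    then show ?thesis using assms(2) i l False unfolding cons_fin_def nxt_def by simp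
  qed
qed

lemma fin_pre:
  assumes "p \<noteq> []" "hd p = s" "cons_fin PlT \<sigma> p" "cons_fin PlF \<tau> p" "i < length p"
  shows "take (Suc i) p = pre \<sigma> \<tau> s i"
  using assms(5)
proof (induction i)
  case 0 then show ?case using assms by (simp add: take_Suc hd_conv_nth)
next
  case (Suc i)
  have "take (Suc (Suc i)) p = take (Suc i) p @ [p ! Suc i]" using Suc by (simp add: take_Suc_conv_app_nth)
  also have "p ! Suc i = nxt \<sigma> \<tau> (take (Suc i) p)" using nxt_cons assms Suc by blast
  finally show ?case using Suc by (simp add: pre_Suc)
qed

lemma inf_pre:
  assumes "shd p = s" "cons_inf PlT \<sigma> p" "cons_inf PlF \<tau> p"
  shows "stake (Suc i) p = pre \<sigma> \<tau> s i"
proof (induction i)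
  case 0 then show ?case using assms by simp
next
  case (Suc i)
  have l: "last (stake (Suc i) p) = p !! i" by (metis last_snoc stake_Suc)
  have "p !! Suc i = nxt \<sigma> \<tau> (stake (Suc i) p)"
  proof (cases "owner (p!!i) = PlT")
    case True then show ?thesis using assms(2) l unfolding cons_inf_def nxt_def by simp
  next
    case False then have "owner (p!!i) = PlF" using player_cases by blast
    then show ?thesis using assms(3) l False unfolding cons_inf_def nxt_def by simp
  qed
  then show ?case using Suc.IH by (metis stake_Suc pre_Suc)
qed

lemma fin_whole_pre:
  assumes "p \<noteq> []" "hd p = s" "cons_fin PlT \<sigma> p" "cons_fin PlF \<tau> p"
  shows "p = pre \<sigma> \<tau> s (length p - 1)"
  using fin_pre[OF assms, of "length p - 1"] assms(1) by simp

lemma ppred_unique: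
  assumes "ppred R s \<sigma> \<tau> q1" "ppred R s \<sigma> \<tau> q2"
  shows "q1 = q2"
proof (cases q1)
  case (BFin a)
  have A: "is_fin_path R a" "hd a = s" "\<not> has_succ R (last a)" "cons_fin PlT \<sigma> a" "cons_fin PlF \<tau> a"
    using assms(1) BFin unfolding ppred_def by auto
  have ane: "a \<noteq> []" using A unfolding is_fin_path_def by simp
  have ae: "a = pre \<sigma> \<tau> s (length a - 1)" using fin_whole_pre A ane by blast
  show ?thesis
  proof (cases q2)
    case (BFin b)
    have Bb: "is_fin_path R b" "hd b = s" "\<not> has_succ R (last b)" "cons_fin PlT \<sigma> b" "cons_fin PlF \<tau> b"
      using assms(2) BFin unfolding ppred_def by auto
    have bne: "b \<noteq> []" using Bb unfolding is_fin_path_def by simp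
    have be: "b = pre \<sigma> \<tau> s (length b - 1)" using fin_whole_pre Bb bne by blast
    have contra: "False" if "length c < length d" "c = pre \<sigma> \<tau> s (length c - 1)" "d = pre \<sigma> \<tau> s (length d - 1)"
        "c \<noteq> []" "is_fin_path R d" "\<not> has_succ R (last c)" for c d
    proof -
      have le: "length c - 1 \<le> length d - 1" using that by simp
      have sc: "Suc (length c - 1) = length c" using that by simp
      have "take (Suc (length c - 1)) d = c"
        using pre_take[OF le, of \<sigma> \<tau> s] that(2,3) by simp
      then have tc: "take (length c) d = c" using sc by simp
      have lt: "length c - 1 < length d" using that by simp
      have lc: "last c = d ! (length c - 1)"
        using last_take_Suc[OF lt] tc sc by simp
      have "length c > 0" using that(4) by simp
      then have lt2: "length c - 1 < length d - 1" using that(1) by linarith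
      have "gedge R (d ! (length c - 1)) (d ! Suc (length c - 1))"
        using that(5) lt2 unfolding is_fin_path_def by blast
      then have "has_succ R (last c)" using lc unfolding has_succ_def by metis
      then show False using that by simp
    qed
    have "length a = length b"
      using contra[of a b] contra[of b a] A Bb ane bne ae be by (metis linorder_neqE_nat)
    then have "a = b" using ae be by simp
    then show ?thesis using \<open>q1 = BFin a\<close> BFin by simp
  next
    case (BInf b)
    have Bb: "shd b = s" "\<forall>i. gedge R (b !! i) (b !! Suc i)" "cons_inf PlT \<sigma> b" "cons_inf PlF \<tau> b"
      using assms(2) BInf unfolding ppred_def by auto
    have "a = stake (length a) b" using ae inf_pre[OF Bb(1,3,4), of "length a - 1"] ane by simp
    then have "last a = b !! (length a - 1)" using ane
      by (metis Suc_diff_1 length_greater_0_conv last_snoc stake_Suc)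
    then have "has_succ R (last a)" using Bb(2) unfolding has_succ_def by metis
    then show ?thesis using A by simp
  qed
next
  case (BInf a)
  have A: "shd a = s" "\<forall>i. gedge R (a !! i) (a !! Suc i)" "cons_inf PlT \<sigma> a" "cons_inf PlF \<tau> a"
    using assms(1) BInf unfolding ppred_def by auto
  show ?thesis
  proof (cases q2)
    case (BFin b)
    have Bb: "is_fin_path R b" "hd b = s" "\<not> has_succ R (last b)" "cons_fin PlT \<sigma> b" "cons_fin PlF \<tau> b"
      using assms(2) BFin unfolding ppred_def by auto
    have bne: "b \<noteq> []" using Bb unfolding is_fin_path_def by simp
    have be: "b = pre \<sigma> \<tau> s (length b - 1)" using fin_whole_pre Bb bne by blast
    have "b = stake (length b) a" using be inf_pre[OF A(1,3,4), of "length b - 1"] bne by simp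
    then have "last b = a !! (length b - 1)" using bne
      by (metis Suc_diff_1 length_greater_0_conv last_snoc stake_Suc)
    then have "has_succ R (last b)" using A(2) unfolding has_succ_def by metis
    then show ?thesis using Bb by simp
  next
    case (BInf b)
    have Bb: "shd b = s" "\<forall>i. gedge R (b !! i) (b !! Suc i)" "cons_inf PlT \<sigma> b" "cons_inf PlF \<tau> b"
      using assms(2) BInf unfolding ppred_def by auto
    have "a !! n = b !! n" for n
    proof -
      have "stake (Suc n) a = stake (Suc n) b" using inf_pre A Bb by metis
      then show ?thesis by (metis last_snoc stake_Suc)
    qed
    then have "a = b" by (rule stream_ext)
    then show ?thesis using \<open>q1 = BInf a\<close> BInf by simp
  qed
qed



lemma gen_edge:
  "\<rho> \<in> gen_strategies R P \<Longrightarrow> is_fin_path R p \<Longrightarrow> owner (last p) = P \<Longrightarrow> has_succ R (last p)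
   \<Longrightarrow> gedge R (last p) (\<rho> p)"
  unfolding gen_strategies_def by blast

lemma nxt_edge:
  assumes "\<sigma> \<in> gen_strategies R PlT" "\<tau> \<in> gen_strategies R PlF" "is_fin_path R p" "has_succ R (last p)"
  shows "gedge R (last p) (nxt \<sigma> \<tau> p)"
proof (cases "owner (last p) = PlT")
  case True then show ?thesis using gen_edge[OF assms(1,3) True assms(4)] unfolding nxt_def by simp
next
  case False then have "owner (last p) = PlF" using player_cases by blast
  then show ?thesis using gen_edge[OF assms(2,3) _ assms(4)] False unfolding nxt_def by simp
qed

lemma pre_path:
  assumes "\<sigma> \<in> gen_strategies R PlT" "\<tau> \<in> gen_strategies R PlF" "is_state R s"
  shows "(\<forall>k<n. has_succ R (last (pre \<sigma> \<tau> s k))) \<Longrightarrow> is_fin_path R (pre \<sigma> \<tau> s n)"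
proof (induction n)
  case 0 then show ?case using assms unfolding is_fin_path_def by simp
next
  case (Suc n)
  then have p: "is_fin_path R (pre \<sigma> \<tau> s n)" by simp
  have "has_succ R (last (pre \<sigma> \<tau> s n))" using Suc.prems by simp
  then have e: "gedge R (last (pre \<sigma> \<tau> s n)) (nxt \<sigma> \<tau> (pre \<sigma> \<tau> s n))" using nxt_edge assms p by blast
  show ?case unfolding pre_Suc by (subst fin_path_append[OF pre_ne]) (use p e in blast)
qed

lemma pre_cons: "cons_fin PlT \<sigma> (pre \<sigma> \<tau> s n) \<and> cons_fin PlF \<tau> (pre \<sigma> \<tau> s n)"
proof (induction n)
  case 0 then show ?case unfolding cons_fin_def by simp
next
  case (Suc n)
  then show ?case unfolding pre_Suc cons_fin_append[OF pre_ne] nxt_def by auto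
qed

lemma ppred_exists:
  assumes "\<sigma> \<in> gen_strategies R PlT" "\<tau> \<in> gen_strategies R PlF" "is_state R s"
  shows "\<exists>q. ppred R s \<sigma> \<tau> q"
proof (cases "\<exists>n. \<not> has_succ R (last (pre \<sigma> \<tau> s n))")
  case True
  define n where "n = (LEAST n. \<not> has_succ R (last (pre \<sigma> \<tau> s n)))"
  have n1: "\<not> has_succ R (last (pre \<sigma> \<tau> s n))" unfolding n_def using True by (rule LeastI_ex)
  have n2: "\<forall>k<n. has_succ R (last (pre \<sigma> \<tau> s k))" unfolding n_def using not_less_Least by blast
  have "ppred R s \<sigma> \<tau> (BFin (pre \<sigma> \<tau> s n))"
    unfolding ppred_def using pre_path[OF assms n2] n1 pre_cons by simp
  then show ?thesis by blast
next
  case False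
  then have hs: "\<And>n. has_succ R (last (pre \<sigma> \<tau> s n))" by blast
  define S where "S = smap last (siterate (stepl \<sigma> \<tau>) [s])"
  have Sn: "S !! n = last (pre \<sigma> \<tau> s n)" for n unfolding S_def pre_def by simp
  have St: "stake (Suc i) S = pre \<sigma> \<tau> s i" for i
  proof (induction i)
    case 0 then show ?case using Sn[of 0] by simp
  next
    case (Suc i)
    have "stake (Suc (Suc i)) S = stake (Suc i) S @ [S !! Suc i]" by (rule stake_Suc)
    then show ?case using Suc Sn[of "Suc i"] by (simp add: pre_Suc)
  qed
  have E: "gedge R (S !! i) (S !! Suc i)" for i
  proof -
    have "is_fin_path R (pre \<sigma> \<tau> s i)" using pre_path[OF assms] hs by blast
    then have "gedge R (last (pre \<sigma> \<tau> s i)) (nxt \<sigma> \<tau> (pre \<sigma> \<tau> s i))" using nxt_edge assms hs by blast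
    then show ?thesis using Sn last_pre_Suc by metis
  qed
  have CT: "cons_inf PlT \<sigma> S" unfolding cons_inf_def
  proof (intro allI impI)
    fix i assume "owner (S !! i) = PlT"
    then show "\<sigma> (stake (Suc i) S) = S !! Suc i" using St Sn last_pre_Suc unfolding nxt_def by metis
  qed
  have CF: "cons_inf PlF \<tau> S" unfolding cons_inf_def
  proof (intro allI impI)
    fix i assume "owner (S !! i) = PlF"
    then show "\<tau> (stake (Suc i) S) = S !! Suc i" using St Sn last_pre_Suc unfolding nxt_def
      by (metis player.distinct(1))
  qed
  have "shd S = s" using Sn[of 0] by simp
  then have "ppred R s \<sigma> \<tau> (BInf S)" unfolding ppred_def using E CT CF assms(3) by simp
  then show ?thesis by blast
qed

lemma play_ppred:
  assumes "\<sigma> \<in> gen_strategies R PlT" "\<tau> \<in> gen_strategies R PlF" "is_state R s"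
  shows "ppred R s \<sigma> \<tau> (play R s \<sigma> \<tau>)"
proof -
  obtain q where q: "ppred R s \<sigma> \<tau> q" using ppred_exists[OF assms] by blast
  have "play R s \<sigma> \<tau> = q" unfolding play_ppred_def
  proof (rule the_equality)
    show "ppred R s \<sigma> \<tau> q" by (rule q)
  next
    fix y assume "ppred R s \<sigma> \<tau> y" then show "y = q" using q ppred_unique by blast
  qed
  then show ?thesis using q by simp
qed

definition maxp where
  "maxp R \<tau> x = {BFin q | q. is_fin_path R q \<and> hd q = Fact x \<and> \<not> has_succ R (last q) \<and> cons_fin PlF \<tau> q}
    \<union> {BInf q | q. shd q = Fact x \<and> (\<forall>i. gedge R (q !! i) (q !! Suc i)) \<and> cons_inf PlF \<tau> q}"

lemma maxp_BFin: "BFin q \<in> maxp R \<tau> x \<longleftrightarrow> is_fin_path R q \<and> hd q = Fact x \<and> \<not> has_succ R (last q) \<and> cons_fin PlF \<tau> q"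
  unfolding maxp_def by blast

lemma maxp_BInf: "BInf q \<in> maxp R \<tau> x \<longleftrightarrow> shd q = Fact x \<and> (\<forall>i. gedge R (q !! i) (q !! Suc i)) \<and> cons_inf PlF \<tau> q"
  unfolding maxp_def by blast

lemma play_maxp:
  assumes "\<sigma> \<in> gen_strategies R PlT" "\<tau> \<in> gen_strategies R PlF"
  shows "play R (Fact x) \<sigma> \<tau> \<in> maxp R \<tau> x"
proof -
  have "ppred R (Fact x) \<sigma> \<tau> (play R (Fact x) \<sigma> \<tau>)"
    using play_ppred[OF assms] by (simp add: is_state_def)
  then show ?thesis unfolding ppred_def by (cases "play R (Fact x) \<sigma> \<tau>") (simp_all add: maxp_BFin maxp_BInf)
qed

lemma maxp_play:
  assumes "\<tau> \<in> gen_strategies R PlF" "b \<in> maxp R \<tau> x"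
  shows "\<exists>\<sigma> \<in> gen_strategies R PlT. play R (Fact x) \<sigma> \<tau> = b"
proof -
  have st: "is_state R (Fact x)" by (simp add: is_state_def)
  have sm: "gedge R (last p) (SOME s'. gedge R (last p) s')" if "has_succ R (last p)" for p
    using that unfolding has_succ_def by (rule someI_ex)
  show ?thesis
  proof (cases b)
    case (BFin q)
    then have "BFin q \<in> maxp R \<tau> x" using assms(2) by simp
    then have Q: "is_fin_path R q" "hd q = Fact x" "\<not> has_succ R (last q)" "cons_fin PlF \<tau> q"
      unfolding maxp_BFin by simp_all
    define \<sigma> where "\<sigma> p = (if p \<noteq> [] \<and> length p < length q \<and> take (length p) q = p then q ! length p
        else (SOME s'. gedge R (last p) s'))" for p
    have g: "\<sigma> \<in> gen_strategies R PlT" unfolding gen_strategies_def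
    proof (intro CollectI allI impI)
      fix p assume p: "is_fin_path R p \<and> owner (last p) = PlT \<and> has_succ R (last p)"
      show "gedge R (last p) (\<sigma> p)"
      proof (cases "p \<noteq> [] \<and> length p < length q \<and> take (length p) q = p")
        case True
        define k where "k = length p - 1"
        have sk: "Suc k = length p" using True k_def by simp
        have kq: "k < length q" "k < length q - 1" using sk True by linarith+
        have "last p = q ! k"
          using last_take_Suc[OF kq(1)] True sk by simp
        moreover have "gedge R (q ! k) (q ! Suc k)"
          using Q(1) kq(2) unfolding is_fin_path_def by blast
        moreover have "\<sigma> p = q ! Suc k" using True sk \<sigma>_def by simp
        ultimately show ?thesis by simp
      next
        case False
        have "\<sigma> p = (SOME s'. gedge R (last p) s')" unfolding \<sigma>_def using False by (rule if_not_P)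
        then show ?thesis using sm p by simp
      qed
    qed
    have c: "cons_fin PlT \<sigma> q" unfolding cons_fin_def
    proof (intro allI impI)
      fix i assume "i < length q - 1" "owner (q ! i) = PlT"
      then have "take (Suc i) q \<noteq> [] \<and> length (take (Suc i) q) < length q \<and> take (length (take (Suc i) q)) q = take (Suc i) q"
        by auto
      then show "\<sigma> (take (Suc i) q) = q ! Suc i" unfolding \<sigma>_def using \<open>i < length q - 1\<close> by simp
    qed
    have "ppred R (Fact x) \<sigma> \<tau> (BFin q)" unfolding ppred_def using Q c by simp
    then have "play R (Fact x) \<sigma> \<tau> = b" using play_ppred[OF g assms(1) st] ppred_unique BFin by blast
    then show ?thesis using g by blast
  next
    case (BInf q)
    then have "BInf q \<in> maxp R \<tau> x" using assms(2) by simp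
    then have Q: "shd q = Fact x" "\<forall>i. gedge R (q !! i) (q !! Suc i)" "cons_inf PlF \<tau> q"
      unfolding maxp_BInf by simp_all
    define \<sigma> where "\<sigma> p = (if p \<noteq> [] \<and> stake (length p) q = p then q !! length p
        else (SOME s'. gedge R (last p) s'))" for p
    have g: "\<sigma> \<in> gen_strategies R PlT" unfolding gen_strategies_def
    proof (intro CollectI allI impI)
      fix p assume p: "is_fin_path R p \<and> owner (last p) = PlT \<and> has_succ R (last p)"
      show "gedge R (last p) (\<sigma> p)"
      proof (cases "p \<noteq> [] \<and> stake (length p) q = p")
        case True
        define k where "k = length p - 1"
        have sk: "Suc k = length p" using True k_def by simp
        have "stake (Suc k) q = stake k q @ [q !! k]" by (rule stake_Suc)
        then have "last p = q !! k" using True sk by (metis last_snoc)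
        moreover have "gedge R (q !! k) (q !! Suc k)" using Q(2) by blast
        moreover have "\<sigma> p = q !! Suc k" using True sk \<sigma>_def by simp
        ultimately show ?thesis by simp
      next
        case False
        have "\<sigma> p = (SOME s'. gedge R (last p) s')" unfolding \<sigma>_def using False by (rule if_not_P)
        then show ?thesis using sm p by simp
      qed
    qed
    have c: "cons_inf PlT \<sigma> q" unfolding cons_inf_def
    proof (intro allI impI)
      fix i assume "owner (q !! i) = PlT"
      have "stake (Suc i) q \<noteq> [] \<and> stake (length (stake (Suc i) q)) q = stake (Suc i) q" by simp
      then show "\<sigma> (stake (Suc i) q) = q !! Suc i" unfolding \<sigma>_def by simp
    qed
    have "ppred R (Fact x) \<sigma> \<tau> (BInf q)" unfolding ppred_def using Q c by (simp add: is_state_def)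
    then have "play R (Fact x) \<sigma> \<tau> = b" using play_ppred[OF g assms(1) st] ppred_unique BInf by blast
    then show ?thesis using g by blast
  qed
qed

lemma plays_eq_maxp:
  assumes "\<tau> \<in> gen_strategies R PlF"
  shows "(\<lambda>\<sigma>. play R (Fact x) \<sigma> \<tau>) ` gen_strategies R PlT = maxp R \<tau> x"
  using play_maxp[OF _ assms] maxp_play[OF assms] by blast



lemma Suc_funpow0[simp]: "(Suc ^^ n) 0 = n"
  by (induction n) simp_all

lemma smap_nats[simp]: "smap f nats !! n = f n"
  by simp

lemma filter_alt:
  "(\<forall>j<length q. P (q!j) \<longleftrightarrow> even j) \<Longrightarrow> filter P q = map (\<lambda>i. q!(2*i)) [0..<(length q + 1) div 2]"
proof (induction "length q" arbitrary: q rule: less_induct)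
  case less
  show ?case
  proof (cases q)
    case Nil then show ?thesis by simp
  next
    case (Cons a r1)
    show ?thesis
    proof (cases r1)
      case Nil
      then show ?thesis using less.prems Cons by auto
    next
      case (Cons b r)
      have q: "q = a # b # r" using Cons \<open>q = a # r1\<close> by simp
      have Pa: "P a" using less.prems q by (metis even_zero length_Cons nth_Cons_0 zero_less_Suc)
      have Pb: "\<not> P b" using less.prems q by force
      have Pr: "\<forall>j<length r. P (r!j) \<longleftrightarrow> even j"
      proof (intro allI impI)
        fix j assume "j < length r"
        then have "Suc (Suc j) < length q" using q by simp
        then have "P (q ! Suc (Suc j)) \<longleftrightarrow> even (Suc (Suc j))" using less.prems by blast
        then show "P (r!j) \<longleftrightarrow> even j" using q by simp
      qed
      have IH: "filter P r = map (\<lambda>i. r!(2*i)) [0..<(length r + 1) div 2]"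
        using less.hyps[of r] q Pr by simp
      have len: "(length q + 1) div 2 = Suc ((length r + 1) div 2)" using q by simp
      have "map (\<lambda>i. q!(2*i)) [0..<(length q + 1) div 2] = q!0 # map (\<lambda>i. q!(2*Suc i)) [0..<(length r + 1) div 2]"
        unfolding len map_upt_Suc by simp
      also have "\<dots> = a # map (\<lambda>i. r!(2*i)) [0..<(length r + 1) div 2]" using q by simp
      finally show ?thesis using q Pa Pb IH by simp
    qed
  qed
qed

lemma sfilter_alt_nth:
  "\<forall>q. (\<forall>j. P (q!!j) \<longleftrightarrow> even j) \<longrightarrow> sfilter P q !! n = q !! (2*n)"
proof (induction n)
  case 0
  show ?case
  proof (intro allI impI)
    fix q :: "'a stream" assume A: "\<forall>j. P (q!!j) \<longleftrightarrow> even j"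
    have q: "q = shd q ## shd (stl q) ## stl (stl q)" by simp
    have "P (shd q)" using A[rule_format, of 0] by simp
    then have "sfilter P q = shd q ## sfilter P (shd (stl q) ## stl (stl q))"
      by (subst q) (simp only: sfilter_Stream if_True)
    then show "sfilter P q !! 0 = q !! (2*0)" by simp
  qed
next
  case (Suc n)
  show ?case
  proof (intro allI impI)
    fix q :: "'a stream" assume A: "\<forall>j. P (q!!j) \<longleftrightarrow> even j"
    have q: "q = shd q ## shd (stl q) ## stl (stl q)" by simp
    have Pa: "P (shd q)" using A[rule_format, of 0] by simp
    have Pb: "\<not> P (shd (stl q))" using A[rule_format, of 1] by simp
    have "sfilter P q = shd q ## sfilter P (stl (stl q))"
      by (subst q) (simp only: sfilter_Stream Pa Pb if_True if_False)
    moreover have "\<forall>j. P (stl (stl q) !! j) \<longleftrightarrow> even j"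
    proof
      fix j show "P (stl (stl q) !! j) \<longleftrightarrow> even j" using A[rule_format, of "Suc (Suc j)"] by simp
    qed
    ultimately have "sfilter P q !! Suc n = stl (stl q) !! (2*n)" using Suc.IH by simp
    then show "sfilter P q !! Suc n = q !! (2 * Suc n)" by simp
  qed
qed

lemma sfilter_alt:
  assumes "\<forall>j. P (q!!j) \<longleftrightarrow> even j"
  shows "sfilter P q = smap (\<lambda>i. q!!(2*i)) nats"
proof (rule stream_ext)
  fix n
  have "sfilter P q !! n = q !! (2*n)" using sfilter_alt_nth assms by blast
  then show "sfilter P q !! n = smap (\<lambda>i. q!!(2*i)) nats !! n" by simp
qed

lemma inf_alt:
  assumes "shd q = Fact x" "\<forall>i. gedge R (q !! i) (q !! Suc i)"
  shows "is_fact (q!!j) \<longleftrightarrow> even j"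
proof (induction j)
  case 0 then show ?case using assms by simp
next
  case (Suc j) then show ?case using assms gedge_flip by force
qed

lemma is_fact_eq: "is_fact s \<Longrightarrow> s = Fact (fact_of s)"
  by (cases s) auto

lemma gedge_Fact_Fd: "just_frame neg lit Fd R \<Longrightarrow> gedge R (Fact y) s' \<Longrightarrow> y \<in> Fd"
  by (cases s') (auto simp: just_frame_def)

fun fseq :: "'f state branch \<Rightarrow> 'f state branch" where
  "fseq (BFin q) = BFin (map (\<lambda>i. q!(2*i)) [0..<Suc (length q div 2)])"
| "fseq (BInf q) = BInf (smap (\<lambda>i. q!!(2*i)) nats)"

lemma fin_max_odd:
  assumes jf: "just_frame neg lit Fd R" and Q: "is_fin_path R q" "hd q = Fact x" "\<not> has_succ R (last q)"
  shows "odd (length q)"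
proof -
  have ne: "q \<noteq> []" using Q unfolding is_fin_path_def by simp
  have l: "last q = q ! (length q - 1)" using ne by (simp add: last_conv_nth)
  have "is_state R (last q)" using fin_path_state[OF Q(1), of "length q - 1"] l ne by simp
  then have "is_fact (last q)" using nonfact_succ[OF jf] Q(3) by blast
  then have "even (length q - 1)" using fin_path_alt[OF Q(1,2), of "length q - 1"] l ne by simp
  then show ?thesis using ne by (cases "length q") auto
qed

lemma del_fseq:
  assumes jf: "just_frame neg lit Fd R" and b: "b \<in> maxp R \<tau> x"
  shows "del_rules b = bmap fact_of (fseq b)"
proof (cases b)
  case (BFin q)
  then have Q: "is_fin_path R q" "hd q = Fact x" "\<not> has_succ R (last q)"
    using b by (simp_all add: maxp_BFin)
  have o: "odd (length q)" using fin_max_odd[OF jf Q] .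
  have "filter is_fact q = map (\<lambda>i. q!(2*i)) [0..<(length q + 1) div 2]"
    using filter_alt fin_path_alt[OF Q(1,2)] by blast
  moreover have "(length q + 1) div 2 = Suc (length q div 2)" using o by presburger
  ultimately show ?thesis using BFin by simp
next
  case (BInf q)
  then have Q: "shd q = Fact x" "\<forall>i. gedge R (q !! i) (q !! Suc i)"
    using b by (simp_all add: maxp_BInf)
  have "sfilter is_fact q = smap (\<lambda>i. q!!(2*i)) nats"
    using sfilter_alt inf_alt[OF Q] by blast
  then show ?thesis using BInf by simp
qed

lemma branch_del:
  assumes jf: "just_frame neg lit Fd R" and x: "x \<in> Fd" and b: "b \<in> maxp R \<tau> x"
  shows "is_branch Fd (del_rules b)"
proof (cases b)
  case (BFin q)
  then have Q: "is_fin_path R q" "hd q = Fact x" "\<not> has_succ R (last q)"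
    using b by (simp_all add: maxp_BFin)
  have ne: "q \<noteq> []" using Q unfolding is_fin_path_def by simp
  have o: "odd (length q)" using fin_max_odd[OF jf Q] .
  define k where "k = length q div 2"
  have lq: "length q = Suc (2*k)" using o k_def by presburger
  have "length q \<noteq> 1"
  proof
    assume "length q = 1"
    then have "last q = Fact x" using Q(2) ne by (metis hd_conv_nth last_conv_nth diff_self_eq_0)
    then show False using Q(3) has_succ_Fact[OF jf] x by simp
  qed
  then have k1: "k \<ge> 1" using lq by simp
  have fi: "q!(2*i) = Fact (fact_of (q!(2*i)))" if "i \<le> k" for i
  proof -
    have "2*i < length q" using that lq by simp
    then have "is_fact (q!(2*i))" using fin_path_alt[OF Q(1,2)] by simp
    then show ?thesis by (rule is_fact_eq)
  qed
  have inFd: "fact_of (q!(2*i)) \<in> Fd" if "i < k" for i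
  proof -
    have "gedge R (q!(2*i)) (q!Suc(2*i))" using Q(1) that lq unfolding is_fin_path_def by simp
    then show ?thesis using fi[of i] that gedge_Fact_Fd[OF jf] by (metis less_imp_le_nat)
  qed
  have lastq: "q!(2*k) = last q" using lq ne by (simp add: last_conv_nth)
  have notFd: "fact_of (q!(2*k)) \<notin> Fd"
    using fi[of k] Q(3) has_succ_Fact[OF jf] lastq by (metis order_refl)
  have dr: "del_rules b = BFin (map (\<lambda>i. fact_of (q!(2*i))) [0..<Suc k])"
    using del_fseq[OF jf b] BFin k_def by simp
  show ?thesis unfolding dr is_branch_def using k1 inFd notFd by (simp add: last_map nth_append)
next
  case (BInf q)
  then have Q: "shd q = Fact x" "\<forall>i. gedge R (q !! i) (q !! Suc i)"
    using b by (simp_all add: maxp_BInf)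
  have "fact_of (q!!(2*i)) \<in> Fd" for i
  proof -
    have "is_fact (q!!(2*i))" using inf_alt[OF Q] by simp
    then have "q!!(2*i) = Fact (fact_of (q!!(2*i)))" by (rule is_fact_eq)
    then show ?thesis using Q(2) gedge_Fact_Fd[OF jf] by metis
  qed
  moreover have "del_rules b = BInf (smap (\<lambda>i. fact_of (q!!(2*i))) nats)"
    using del_fseq[OF jf b] BInf by (simp add: stream.map_comp o_def)
  ultimately show ?thesis unfolding is_branch_def by simp
qed

lemma tv_Inf_neg: "tv_Inf (tv_neg ` S) = tv_neg (tv_Sup S)"
proof -
  have n1: "tv_neg t = FF \<longleftrightarrow> t = TT" for t by (cases t) auto
  have n2: "tv_neg t = UU \<longleftrightarrow> t = UU" for t by (cases t) auto
  have a: "FF \<in> tv_neg ` S \<longleftrightarrow> TT \<in> S" unfolding image_iff using n1 by metis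
  have b: "UU \<in> tv_neg ` S \<longleftrightarrow> UU \<in> S" unfolding image_iff using n2 by metis
  show ?thesis unfolding tv_Inf_def tv_Sup_def a b by simp
qed

lemma bmap_comp: "bmap f (bmap g b) = bmap (f \<circ> g) b"
  by (cases b) (simp_all add: stream.map_comp)

lemma final_val:
  assumes jf: "just_frame neg lit Fd R" and x: "x \<in> Fd" and cb: "consistent_be neg Fd B"
    and I: "is_interp neg lit I" and tau: "\<tau> \<in> gen_strategies R PlF"
    and BJeq: "BJ J n = (\<lambda>b. bmap neg (del_rules b)) ` maxp R \<tau> x"
  shows "val J n B I = tv_neg (tv_Sup {u R B I x \<sigma> \<tau> | \<sigma>. \<sigma> \<in> gen_strategies R PlT})"
proof -
  have U: "{u R B I x \<sigma> \<tau> | \<sigma>. \<sigma> \<in> gen_strategies R PlT} = (\<lambda>b. I (B (del_rules b))) ` maxp R \<tau> x"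
  proof -
    have "{u R B I x \<sigma> \<tau> | \<sigma>. \<sigma> \<in> gen_strategies R PlT} = (\<lambda>b. I (B (del_rules b))) ` ((\<lambda>\<sigma>. play R (Fact x) \<sigma> \<tau>) ` gen_strategies R PlT)"
      unfolding u_def by blast
    then show ?thesis using plays_eq_maxp[OF tau] by simp
  qed
  have "(\<lambda>b. I (B b)) ` BJ J n = (\<lambda>b. I (B (bmap neg (del_rules b)))) ` maxp R \<tau> x"
    unfolding BJeq by (simp add: image_image)
  also have "\<dots> = (\<lambda>b. tv_neg (I (B (del_rules b)))) ` maxp R \<tau> x"
  proof (rule image_cong[OF refl])
    fix b assume "b \<in> maxp R \<tau> x"
    then have "is_branch Fd (del_rules b)" using branch_del[OF jf x] by blast
    then have "B (bmap neg (del_rules b)) = neg (B (del_rules b))" using cb unfolding consistent_be_def by blast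
    then show "I (B (bmap neg (del_rules b))) = tv_neg (I (B (del_rules b)))" using I unfolding is_interp_def by simp
  qed
  also have "\<dots> = tv_neg ` ((\<lambda>b. I (B (del_rules b))) ` maxp R \<tau> x)" by (simp add: image_image)
  finally have E: "(\<lambda>b. I (B b)) ` BJ J n = tv_neg ` ((\<lambda>b. I (B (del_rules b))) ` maxp R \<tau> x)" .
  show ?thesis unfolding val_def U E by (rule tv_Inf_neg)
qed



lemma BJ_relabel: "BJ (N, E, \<lambda>n. f (lab n)) n = bmap f ` BJ (N, E, lab) n"
proof -
  have "BJ (N, E, \<lambda>n. f (lab n)) n =
     {BFin (map f (map lab p)) | p. p \<noteq> [] \<and> hd p = n \<and> set p \<subseteq> N \<and>
        (\<forall>i < length p - 1. (p ! i, p ! Suc i) \<in> E) \<and> \<not> (\<exists>m \<in> N. (last p, m) \<in> E)}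
   \<union> {BInf (smap f (smap lab p)) | p. shd p = n \<and> (\<forall>i. p !! i \<in> N \<and> (p !! i, p !! Suc i) \<in> E)}"
    unfolding BJ_def by (simp add: stream.map_comp o_def)
  also have "\<dots> = bmap f ` BJ (N, E, lab) n"
  proof -
    have a: "bmap f ` {BFin (map lab p) | p. P p} = {BFin (map f (map lab p)) | p. P p}" for P
    proof -
      have "{BFin (map lab p) | p. P p} = (\<lambda>p. BFin (map lab p)) ` {p. P p}" by blast
      moreover have "{BFin (map f (map lab p)) | p. P p} = (\<lambda>p. BFin (map f (map lab p))) ` {p. P p}" by blast
      ultimately show ?thesis by (simp add: image_image)
    qed
    have b: "bmap f ` {BInf (smap lab p) | p. P p} = {BInf (smap f (smap lab p)) | p. P p}" for P
    proof -
      have "{BInf (smap lab p) | p. P p} = (\<lambda>p. BInf (smap lab p)) ` {p. P p}" by blast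
      moreover have "{BInf (smap f (smap lab p)) | p. P p} = (\<lambda>p. BInf (smap f (smap lab p))) ` {p. P p}" by blast
      ultimately show ?thesis by (simp add: image_image)
    qed
    show ?thesis unfolding BJ_def prod.case image_Un a b ..
  qed
  finally show ?thesis .
qed

lemma in_C: "p \<in> cons_paths_from R P \<rho> x \<longleftrightarrow> is_fin_path R p \<and> hd p = Fact x \<and> cons_fin P \<rho> p"
  unfolding cons_paths_from_def by simp

lemma C_take: "p \<in> cons_paths_from R P \<rho> x \<Longrightarrow> 0 < k \<Longrightarrow> take k p \<in> cons_paths_from R P \<rho> x"
  unfolding in_C using fin_path_take cons_fin_take
  by (metis hd_take is_fin_path_def)

lemma C_ne: "p \<in> cons_paths_from R P \<rho> x \<Longrightarrow> p \<noteq> []"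
  unfolding in_C is_fin_path_def by simp

lemma C_extend:
  assumes jf: "just_frame neg lit Fd R" and tau: "\<tau> \<in> gen_strategies R PlF"
    and q: "q \<in> cons_paths_from R PlF \<tau> x" and l: "last q = Fact y" and yA: "(y, A) \<in> R"
  shows "q @ [Rule y A, \<tau> (q @ [Rule y A])] \<in> cons_paths_from R PlF \<tau> x"
proof -
  have ne: "q \<noteq> []" by (rule C_ne[OF q])
  have Q: "is_fin_path R q" "hd q = Fact x" "cons_fin PlF \<tau> q" using q unfolding in_C by simp_all
  have p1: "is_fin_path R (q @ [Rule y A])" unfolding fin_path_append[OF ne] using Q(1) l yA by simp
  have c1: "cons_fin PlF \<tau> (q @ [Rule y A])" unfolding cons_fin_append[OF ne] using Q(3) l by simp
  have o: "owner (last (q @ [Rule y A])) = PlF" by simp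
  have e: "gedge R (Rule y A) (\<tau> (q @ [Rule y A]))"
    using gen_edge[OF tau p1 o] has_succ_Rule[OF jf yA] by simp
  have ne2: "q @ [Rule y A] \<noteq> []" by simp
  have p2: "is_fin_path R ((q @ [Rule y A]) @ [\<tau> (q @ [Rule y A])])" unfolding fin_path_append[OF ne2] using p1 e by simp
  have c2: "cons_fin PlF \<tau> ((q @ [Rule y A]) @ [\<tau> (q @ [Rule y A])])" unfolding cons_fin_append[OF ne2] using c1 by simp
  show ?thesis using p2 c2 Q(2) ne unfolding in_C by simp
qed

lemma tree_filter:
  "filter_rules (play_tree R PlF \<tau> x) =
    ({n \<in> cons_paths_from R PlF \<tau> x. is_fact (last n)},
     {(n, m). n \<in> cons_paths_from R PlF \<tau> x \<and> is_fact (last n) \<and> (\<exists>r f. m = n @ [r, f]) \<and> m \<in> cons_paths_from R PlF \<tau> x},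
     last)"
proof -
  let ?C = "cons_paths_from R PlF \<tau> x"
  let ?E = "{(p, p @ [s]) | p s. p \<in> ?C \<and> p @ [s] \<in> ?C}"
  let ?N' = "{n \<in> ?C. is_fact (last n)}"
  have eq: "(n \<in> ?N' \<and> m \<in> ?N' \<and> ((n, m) \<in> ?E \<or> (\<exists>k \<in> ?C. \<not> is_fact (last k) \<and> (n, k) \<in> ?E \<and> (k, m) \<in> ?E)))
      \<longleftrightarrow> (n \<in> ?C \<and> is_fact (last n) \<and> (\<exists>r f. m = n @ [r, f]) \<and> m \<in> ?C)" for n m
  proof
    assume A: "n \<in> ?N' \<and> m \<in> ?N' \<and> ((n, m) \<in> ?E \<or> (\<exists>k \<in> ?C. \<not> is_fact (last k) \<and> (n, k) \<in> ?E \<and> (k, m) \<in> ?E))"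
    then have nC: "n \<in> ?C" "is_fact (last n)" "m \<in> ?C" "is_fact (last m)" by auto
    have nne: "n \<noteq> []" by (rule C_ne[OF nC(1)])
    show "n \<in> ?C \<and> is_fact (last n) \<and> (\<exists>r f. m = n @ [r, f]) \<and> m \<in> ?C"
    proof (cases "(n, m) \<in> ?E")
      case True
      then obtain s where s: "m = n @ [s]" by blast
      have "is_fin_path R (n @ [s])" using nC(3) s unfolding in_C by simp
      then have "gedge R (last n) s" unfolding fin_path_append[OF nne] by simp
      then have False using gedge_flip nC s by (metis last_snoc)
      then show ?thesis ..
    next
      case False
      then obtain k where "(n, k) \<in> ?E" "(k, m) \<in> ?E" using A by blast
      then obtain r f where "k = n @ [r]" "m = k @ [f]" by blast
      then show ?thesis using nC by simp
    qed
  next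
    assume A: "n \<in> ?C \<and> is_fact (last n) \<and> (\<exists>r f. m = n @ [r, f]) \<and> m \<in> ?C"
    then obtain r f where m: "m = n @ [r, f]" by blast
    have nC0: "n \<in> ?C" using A by simp
    have nne: "n \<noteq> []" by (rule C_ne[OF nC0])
    have kC: "n @ [r] \<in> ?C" using C_take[of m R PlF \<tau> x "Suc (length n)"] A m by simp
    have "is_fin_path R (n @ [r])" using kC unfolding in_C by simp
    then have e1: "gedge R (last n) r" unfolding fin_path_append[OF nne] by simp
    have "is_fin_path R ((n @ [r]) @ [f])" using A m unfolding in_C by simp
    moreover have sne: "n @ [r] \<noteq> []" by simp
    ultimately have "gedge R (last (n @ [r])) f" using fin_path_append[OF sne] by blast
    then have e2: "gedge R r f" by simp
    have fr: "\<not> is_fact r" using e1 gedge_flip A by blast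
    have ff: "is_fact f" using e2 gedge_flip fr by blast
    have "(n, n @ [r]) \<in> ?E" using A kC by blast
    moreover have "(n @ [r], m) \<in> ?E" using kC A m by auto
    ultimately show "n \<in> ?N' \<and> m \<in> ?N' \<and> ((n, m) \<in> ?E \<or> (\<exists>k \<in> ?C. \<not> is_fact (last k) \<and> (n, k) \<in> ?E \<and> (k, m) \<in> ?E))"
      using A m ff fr kC by auto
  qed
  show ?thesis unfolding filter_rules_def play_tree_def Let_def
    using eq by (simp add: set_eq_iff)
qed



lemma chain_len:
  assumes "p \<noteq> []" "length (hd p) = 1" "\<forall>i<length p - 1. \<exists>r f. p!Suc i = p!i @ [r, f]"
  shows "i < length p \<Longrightarrow> length (p!i) = 2*i+1"
proof (induction i)
  case 0 then show ?case using assms by (simp add: hd_conv_nth)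
next
  case (Suc i)
  then obtain r f where "p!Suc i = p!i @ [r, f]" using assms(3) by (metis Suc_lessE diff_Suc_1)
  then show ?case using Suc by simp
qed

lemma chain_pre:
  assumes "p \<noteq> []" "length (hd p) = 1" "\<forall>i<length p - 1. \<exists>r f. p!Suc i = p!i @ [r, f]"
  shows "j < length p \<Longrightarrow> i \<le> j \<Longrightarrow> take (2*i+1) (p!j) = p!i"
proof (induction j)
  case 0 then show ?case using chain_len[OF assms, of 0] by simp
next
  case (Suc j)
  show ?case
  proof (cases "i = Suc j")
    case True then show ?thesis using chain_len[OF assms Suc.prems(1)] by simp
  next
    case False
    then have ij: "i \<le> j" using Suc by simp
    obtain r f where e: "p!Suc j = p!j @ [r, f]" using assms(3) Suc.prems by (metis Suc_lessE diff_Suc_1)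
    have lj: "length (p!j) = 2*j+1" using chain_len[OF assms, of j] Suc.prems by simp
    have "take (2*i+1) (p!Suc j) = take (2*i+1) (p!j)" using e lj ij by simp
    then show ?thesis using Suc ij by simp
  qed
qed

lemma schain_len:
  assumes "length (shd P) = 1" "\<forall>i. \<exists>r f. P!!Suc i = P!!i @ [r, f]"
  shows "length (P!!i) = 2*i+1"
proof (induction i)
  case 0 then show ?case using assms by simp
next
  case (Suc i)
  then obtain r f where "P!!Suc i = P!!i @ [r, f]" using assms(2) by blast
  then show ?case using Suc by simp
qed

lemma schain_pre:
  assumes "length (shd P) = 1" "\<forall>i. \<exists>r f. P!!Suc i = P!!i @ [r, f]"
  shows "i \<le> j \<Longrightarrow> take (2*i+1) (P!!j) = P!!i"
proof (induction j)
  case 0 then show ?case using schain_len[OF assms, of 0] by simp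
next
  case (Suc j)
  show ?case
  proof (cases "i = Suc j")
    case True
    have "length (P!!Suc j) = 2*Suc j+1" by (rule schain_len[OF assms])
    then show ?thesis using True by (metis order_refl take_all)
  next
    case False
    then have ij: "i \<le> j" using Suc by simp
    obtain r f where e: "P!!Suc j = P!!j @ [r, f]" using assms(2) by blast
    have lj: "length (P!!j) = 2*j+1" using schain_len[OF assms] by simp
    have "take (2*i+1) (P!!Suc j) = take (2*i+1) (P!!j)" using e lj ij by simp
    then show ?thesis using Suc ij by simp
  qed
qed

lemma maxp_stake_C:
  assumes "BInf q \<in> maxp R \<tau> x"
  shows "stake (Suc n) q \<in> cons_paths_from R PlF \<tau> x"
proof -
  have Q: "shd q = Fact x" "\<forall>i. gedge R (q !! i) (q !! Suc i)" "cons_inf PlF \<tau> q"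
    using assms by (simp_all add: maxp_BInf)
  have "\<forall>i<length (stake (Suc n) q) - 1. gedge R (stake (Suc n) q ! i) (stake (Suc n) q ! Suc i)"
  proof (intro allI impI)
    fix i assume "i < length (stake (Suc n) q) - 1"
    then have a: "i < Suc n" "Suc i < Suc n" by simp_all
    have "stake (Suc n) q ! i = q !! i" using a(1) by (rule stake_nth)
    moreover have "stake (Suc n) q ! Suc i = q !! Suc i" using a(2) by (rule stake_nth)
    ultimately show "gedge R (stake (Suc n) q ! i) (stake (Suc n) q ! Suc i)" using Q(2) by simp
  qed
  moreover have "hd (stake (Suc n) q) = Fact x" using Q(1) by simp
  ultimately have "is_fin_path R (stake (Suc n) q)" unfolding is_fin_path_def
    by (simp add: is_state_def del: stake.simps)
  moreover have "cons_fin PlF \<tau> (stake (Suc n) q)" unfolding cons_fin_def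
  proof (intro allI impI)
    fix i assume i: "i < length (stake (Suc n) q) - 1" and o: "owner (stake (Suc n) q ! i) = PlF"
    then have a: "i < Suc n" "Suc i < Suc n" by simp_all
    have n1: "stake (Suc n) q ! i = q !! i" using a(1) by (rule stake_nth)
    have n2: "stake (Suc n) q ! Suc i = q !! Suc i" using a(2) by (rule stake_nth)
    have "owner (q !! i) = PlF" using o unfolding n1 .
    then have "\<tau> (stake (Suc i) q) = q !! Suc i" using Q(3) unfolding cons_inf_def by blast
    moreover have "take (Suc i) (stake (Suc n) q) = stake (Suc i) q"
      using a take_stake[of "Suc i" "Suc n" q] by (simp add: min_def del: stake.simps)
    ultimately show "\<tau> (take (Suc i) (stake (Suc n) q)) = stake (Suc n) q ! Suc i" unfolding n2 by simp
  qed
  moreover have "hd (stake (Suc n) q) = Fact x" using Q(1) by simp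
  ultimately show ?thesis unfolding in_C by blast
qed

lemma stake_last: "last (stake (Suc n) q) = q !! n"
  by (metis last_snoc stake_Suc)

lemma stake_two: "stake (2 * Suc i + 1) q = stake (2*i+1) q @ [q !! (2*i+1), q !! (2*i+2)]"
proof -
  have "stake (2 * Suc i + 1) q = stake (Suc (Suc (2*i+1))) q" by simp
  also have "\<dots> = stake (2*i+1) q @ [q !! (2*i+1), q !! (2*i+2)]"
    by (simp only: stake_Suc) simp
  finally show ?thesis .
qed

lemma take_two: "2*i+2 < length q \<Longrightarrow> take (2 * Suc i + 1) q = take (2*i+1) q @ [q ! (2*i+1), q ! (2*i+2)]"
proof -
  assume a: "2*i+2 < length q"
  have "take (2 * Suc i + 1) q = take (Suc (Suc (2*i+1))) q" by simp
  also have "\<dots> = take (2*i+1) q @ [q ! (2*i+1), q ! (2*i+2)]"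
    using a by (simp add: take_Suc_conv_app_nth)
  finally show ?thesis .
qed



lemma tE_fact:
  assumes "m = n @ [r, f]" "m \<in> cons_paths_from R PlF \<tau> x" "is_fact (last n)" "n \<noteq> []"
  shows "is_fact (last m)"
proof -
  have "is_fin_path R ((n @ [r]) @ [f])" using assms unfolding in_C by simp
  moreover have sne: "n @ [r] \<noteq> []" by simp
  ultimately have p1: "is_fin_path R (n @ [r])" and e2: "gedge R (last (n @ [r])) f"
    using fin_path_append[OF sne] by blast+
  have e1: "gedge R (last n) r" using p1 fin_path_append[OF assms(4)] by blast
  have nr: "\<not> is_fact r" using gedge_flip[OF e1] assms(3) by simp
  have "is_fact f" using gedge_flip[OF e2] nr by simp
  then show ?thesis using assms(1) by simp
qed

lemma BJ_tree:
  assumes jf: "just_frame neg lit Fd R" and tau: "\<tau> \<in> gen_strategies R PlF"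
  shows "BJ (filter_rules (play_tree R PlF \<tau> x)) [Fact x] = fseq ` maxp R \<tau> x"
proof -
  define C where "C = cons_paths_from R PlF \<tau> x"
  define N' where "N' = {n \<in> C. is_fact (last n)}"
  define E' where "E' = {(n, m). n \<in> C \<and> is_fact (last n) \<and> (\<exists>r f. m = n @ [r, f]) \<and> m \<in> C}"
  have TF: "filter_rules (play_tree R PlF \<tau> x) = (N', E', last)"
    unfolding tree_filter N'_def E'_def C_def ..
  have inE: "(n, m) \<in> E' \<longleftrightarrow> n \<in> C \<and> is_fact (last n) \<and> (\<exists>r f. m = n @ [r, f]) \<and> m \<in> C" for n m
    unfolding E'_def by simp
  have inN: "n \<in> N' \<longleftrightarrow> n \<in> C \<and> is_fact (last n)" for n unfolding N'_def by simp
  have BJ: "BJ (N', E', last) [Fact x] =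
     {BFin (map last p) | p. p \<noteq> [] \<and> hd p = [Fact x] \<and> set p \<subseteq> N' \<and>
        (\<forall>i < length p - 1. (p ! i, p ! Suc i) \<in> E') \<and> \<not> (\<exists>m \<in> N'. (last p, m) \<in> E')}
   \<union> {BInf (smap last p) | p. shd p = [Fact x] \<and> (\<forall>i. p !! i \<in> N' \<and> (p !! i, p !! Suc i) \<in> E')}"
    unfolding BJ_def by simp
  have sub1: "BFin (map last p) \<in> fseq ` maxp R \<tau> x"
    if p: "p \<noteq> []" "hd p = [Fact x]" "set p \<subseteq> N'" "\<forall>i < length p - 1. (p ! i, p ! Suc i) \<in> E'"
       "\<not> (\<exists>m \<in> N'. (last p, m) \<in> E')" for p
  proof -
    have ch: "\<forall>i<length p - 1. \<exists>r f. p!Suc i = p!i @ [r, f]" using p(4) inE by blast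
    have h1: "length (hd p) = 1" using p(2) by simp
    define L where "L = length p"
    define q where "q = last p"
    have qL: "q = p ! (L - 1)" unfolding q_def L_def using p(1) by (simp add: last_conv_nth)
    have L0: "0 < L" unfolding L_def using p(1) by simp
    have lq: "length q = 2*(L-1)+1" using chain_len[OF p(1) h1 ch, of "L - 1"] qL L0 L_def by simp
    have tk: "take (2*i+1) q = p!i" if "i < L" for i
      using chain_pre[OF p(1) h1 ch, of "L - 1" i] qL L0 L_def that by simp
    have qN: "q \<in> N'" using p(3) p(1) unfolding q_def by auto
    then have qC: "q \<in> C" and qf: "is_fact (last q)" using inN by auto
    have labels: "map last p = map (\<lambda>i. q!(2*i)) [0..<Suc (length q div 2)]"
    proof (rule nth_equalityI)
      show "length (map last p) = length (map (\<lambda>i. q!(2*i)) [0..<Suc (length q div 2)])"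
        using lq L0 L_def by simp
    next
      fix i assume "i < length (map last p)"
      then have i: "i < L" unfolding L_def by simp
      have "last (p!i) = last (take (Suc (2*i)) q)" using tk[OF i] by simp
      also have "\<dots> = q ! (2*i)" using lq i by (intro last_take_Suc) simp
      finally have li: "last (p!i) = q ! (2*i)" .
      have LL: "Suc (length q div 2) = L" using lq L0 by simp
      have "map (\<lambda>i. q!(2*i)) [0..<Suc (length q div 2)] ! i = q!(2*i)" unfolding LL using i by simp
      moreover have "map last p ! i = last (p!i)" using i L_def by simp
      ultimately show "map last p ! i = map (\<lambda>i. q!(2*i)) [0..<Suc (length q div 2)] ! i"
        using li by simp
    qed
    have Qs: "is_fin_path R q" "hd q = Fact x" "cons_fin PlF \<tau> q" using qC unfolding C_def in_C by simp_all
    have nsucc: "\<not> has_succ R (last q)"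
    proof
      assume hs: "has_succ R (last q)"
      obtain y where y: "last q = Fact y" using qf is_fact_eq by blast
      then have "y \<in> Fd" using hs has_succ_Fact[OF jf] by simp
      then obtain A where yA: "(y, A) \<in> R" using jf unfolding just_frame_def by blast
      define m where "m = q @ [Rule y A, \<tau> (q @ [Rule y A])]"
      have mC: "m \<in> C" unfolding m_def C_def using C_extend[OF jf tau _ y yA] qC C_def by blast
      have qne: "q \<noteq> []" using Qs unfolding is_fin_path_def by simp
      have "is_fact (last m)" using tE_fact[OF m_def mC[unfolded C_def] qf qne] .
      then have "m \<in> N'" using mC inN by blast
      moreover have "(q, m) \<in> E'" using inE qC qf mC m_def by blast
      ultimately show False using p(5) unfolding q_def by blast
    qed
    have "BFin q \<in> maxp R \<tau> x" using Qs nsucc by (simp add: maxp_BFin)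
    moreover have "fseq (BFin q) = BFin (map last p)" using labels by simp
    ultimately show ?thesis by (metis image_eqI)
  qed
  have sub2: "fseq b \<in> BJ (N', E', last) [Fact x]" if b: "b \<in> maxp R \<tau> x" "\<exists>q. b = BFin q" for b
  proof -
    obtain q where bq: "b = BFin q" using b(2) by blast
    have Q: "is_fin_path R q" "hd q = Fact x" "\<not> has_succ R (last q)" "cons_fin PlF \<tau> q"
      using b(1) bq by (simp_all add: maxp_BFin)
    have qC: "q \<in> C" unfolding C_def in_C using Q by simp
    have qne: "q \<noteq> []" using Q unfolding is_fin_path_def by simp
    have o: "odd (length q)" using fin_max_odd[OF jf Q(1-3)] .
    define k where "k = length q div 2"
    have lq: "length q = 2*k+1" using o k_def by presburger
    define p where "p = map (\<lambda>i. take (2*i+1) q) [0..<Suc k]"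
    have pne: "p \<noteq> []" unfolding p_def by simp
    have hp: "hd p = [Fact x]"
    proof -
      have "hd p = take 1 q" unfolding p_def map_upt_Suc by simp
      also have "\<dots> = [Fact x]" using Q(2) qne by (cases q) auto
      finally show ?thesis .
    qed
    have pN: "set p \<subseteq> N'"
    proof
      fix n assume "n \<in> set p"
      then have "n \<in> (\<lambda>i. take (2*i+1) q) ` {0..<Suc k}" unfolding p_def set_map set_upt .
      then obtain i where i0: "i < Suc k" "n = take (2*i+1) q" by auto
      then have i: "i \<le> k" "n = take (2*i+1) q" by simp_all
      have "n \<in> C" using C_take[of q R PlF \<tau> x "2*i+1"] qC i C_def by simp
      moreover have "last n = q ! (2*i)" using i lq by (simp add: last_take_Suc)
      moreover have "is_fact (q ! (2*i))" using fin_path_alt[OF Q(1,2), of "2*i"] i lq by simp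
      ultimately show "n \<in> N'" using inN by simp
    qed
    have pE: "\<forall>i < length p - 1. (p ! i, p ! Suc i) \<in> E'"
    proof (intro allI impI)
      fix i assume "i < length p - 1"
      then have i: "i < k" unfolding p_def by simp
      have pi: "p ! i = take (2*i+1) q" "p ! Suc i = take (2 * Suc i + 1) q" unfolding p_def using i
        by (simp_all del: upt_Suc)
      have "p ! Suc i = p ! i @ [q ! (2*i+1), q ! (2*i+2)]" unfolding pi using take_two[of i q] i lq by simp
      moreover have lp: "length p = Suc k" unfolding p_def by simp
      moreover have "p ! i \<in> N'" "p ! Suc i \<in> N'"
        using pN nth_mem[of i p] nth_mem[of "Suc i" p] i lp by auto
      ultimately show "(p ! i, p ! Suc i) \<in> E'" unfolding inE inN by blast
    qed
    have lp: "last p = q" unfolding p_def using lq qne by (simp add: last_conv_nth)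
    have pmax: "\<not> (\<exists>m \<in> N'. (last p, m) \<in> E')"
    proof
      assume "\<exists>m \<in> N'. (last p, m) \<in> E'"
      then obtain m where "(q, m) \<in> E'" using lp by auto
      then obtain r f where rf: "m = q @ [r, f]" "m \<in> C" unfolding inE by blast
      have "q @ [r] = take (Suc (length q)) m" using rf by simp
      then have "q @ [r] \<in> C" using C_take[of m R PlF \<tau> x "Suc (length q)"] rf C_def by simp
      then have "is_fin_path R (q @ [r])" unfolding C_def in_C by simp
      then have "gedge R (last q) r" unfolding fin_path_append[OF qne] by simp
      then have "has_succ R (last q)" unfolding has_succ_def by (rule exI)
      then show False using Q(3) by simp
    qed
    have "map last p = map (\<lambda>i. q!(2*i)) [0..<Suc k]"
      unfolding p_def using lq qne by (simp add: last_take_Suc last_conv_nth)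
    then have "fseq b = BFin (map last p)" using bq k_def by simp
    then show ?thesis unfolding BJ using pne hp pN pE pmax by blast
  qed
  have sub3: "BInf (smap last P) \<in> fseq ` maxp R \<tau> x"
    if P: "shd P = [Fact x]" "\<forall>i. P !! i \<in> N' \<and> (P !! i, P !! Suc i) \<in> E'" for P
  proof -
    have ch: "\<forall>i. \<exists>r f. P!!Suc i = P!!i @ [r, f]" using P(2) unfolding inE by blast
    have h1: "length (shd P) = 1" using P(1) by simp
    have len: "length (P!!i) = 2*i+1" for i by (rule schain_len[OF h1 ch])
    have pre: "i \<le> j \<Longrightarrow> take (2*i+1) (P!!j) = P!!i" for i j by (rule schain_pre[OF h1 ch])
    define q where "q = smap (\<lambda>j. (P!!j)!j) nats"
    have qn: "q !! j = (P!!j)!j" for j unfolding q_def by simp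
    have sk: "stake (2*i+1) q = P!!i" for i
    proof (rule nth_equalityI)
      show "length (stake (2*i+1) q) = length (P!!i)" using len by simp
    next
      fix k assume "k < length (stake (2*i+1) q)"
      then have k: "k < 2*i+1" by simp
      have "stake (2*i+1) q ! k = (P!!k)!k" using k qn by (simp del: stake.simps)
      also have "\<dots> = (P!!i)!k"
      proof (cases "k \<le> i")
        case True
        then have "P!!k = take (2*k+1) (P!!i)" using pre by simp
        then show ?thesis by simp
      next
        case False
        then have "P!!i = take (2*i+1) (P!!k)" using pre by simp
        then show ?thesis using k by simp
      qed
      finally show "stake (2*i+1) q ! k = P!!i ! k" .
    qed
    have PC: "P!!i \<in> C" for i using P(2) inN by blast
    have Pf: "is_fin_path R (P!!i)" "cons_fin PlF \<tau> (P!!i)" for i using PC[of i] unfolding C_def in_C by simp_all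
    have shq: "shd q = Fact x" using qn[of 0] P(1) by simp
    have ge: "gedge R (q!!j) (q!!Suc j)" for j
    proof -
      have e: "gedge R ((P!!Suc j)!j) ((P!!Suc j)!Suc j)" using Pf(1)[of "Suc j"] len[of "Suc j"]
        unfolding is_fin_path_def by simp
      have "(P!!Suc j) = stake (2*Suc j+1) q" by (rule sk[symmetric])
      then have "(P!!Suc j)!j = q!!j" "(P!!Suc j)!Suc j = q!!Suc j" by (simp_all del: stake.simps)
      then show ?thesis using e by simp
    qed
    have ci: "cons_inf PlF \<tau> q" unfolding cons_inf_def
    proof (intro allI impI)
      fix j assume o: "owner (q !! j) = PlF"
      have st: "P!!Suc j = stake (2*Suc j+1) q" by (rule sk[symmetric])
      have a: "(P!!Suc j)!j = q!!j" "(P!!Suc j)!Suc j = q!!Suc j" unfolding st by (simp_all del: stake.simps)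
      have tk: "take (Suc j) (P!!Suc j) = stake (Suc j) q" unfolding st take_stake by (simp add: min_def del: stake.simps)
      have "j < length (P!!Suc j) - 1" using len[of "Suc j"] by simp
      then have "\<tau> (take (Suc j) (P!!Suc j)) = (P!!Suc j) ! Suc j"
        using Pf(2)[of "Suc j"] o a unfolding cons_fin_def by simp
      then show "\<tau> (stake (Suc j) q) = q !! Suc j" using tk a by simp
    qed
    have qm: "BInf q \<in> maxp R \<tau> x" using shq ge ci by (simp add: maxp_BInf)
    have "smap last P = smap (\<lambda>i. q!!(2*i)) nats"
    proof (rule stream_ext)
      fix i
      have "last (P!!i) = last (stake (Suc (2*i)) q)" using sk[of i] by (simp del: stake.simps)
      also have "\<dots> = q!!(2*i)" by (rule stake_last)
      finally show "smap last P !! i = smap (\<lambda>i. q!!(2*i)) nats !! i" by simp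
    qed
    then have "fseq (BInf q) = BInf (smap last P)" by simp
    then show ?thesis using qm by (metis image_eqI)
  qed
  have sub4: "fseq b \<in> BJ (N', E', last) [Fact x]" if b: "b \<in> maxp R \<tau> x" "\<exists>q. b = BInf q" for b
  proof -
    obtain q where bq: "b = BInf q" using b(2) by blast
    have bm: "BInf q \<in> maxp R \<tau> x" using b(1) bq by simp
    have Q: "shd q = Fact x" "\<forall>i. gedge R (q !! i) (q !! Suc i)" "cons_inf PlF \<tau> q"
      using bm by (simp_all add: maxp_BInf)
    define P where "P = smap (\<lambda>i. stake (2*i+1) q) nats"
    have Pn: "P !! i = stake (2*i+1) q" for i unfolding P_def by simp
    have inN': "P !! i \<in> N'" for i
    proof -
      have "P !! i \<in> C" unfolding Pn C_def using maxp_stake_C[OF bm, of "2*i"] by simp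
      moreover have "last (P !! i) = q !! (2*i)" unfolding Pn using stake_last[of "2*i" q] by simp
      moreover have "is_fact (q !! (2*i))" using inf_alt[OF Q(1,2)] by simp
      ultimately show ?thesis using inN by simp
    qed
    have inE': "(P !! i, P !! Suc i) \<in> E'" for i
    proof -
      have "P !! Suc i = P !! i @ [q !! (2*i+1), q !! (2*i+2)]" unfolding Pn by (rule stake_two)
      then show ?thesis using inN'[of i] inN'[of "Suc i"] unfolding inE inN by blast
    qed
    have "shd P = [Fact x]" using Pn[of 0] Q(1) by simp
    moreover have "fseq b = BInf (smap last P)"
    proof -
      have "smap last P = smap (\<lambda>i. q!!(2*i)) nats"
      proof (rule stream_ext)
        fix i show "smap last P !! i = smap (\<lambda>i. q!!(2*i)) nats !! i"
          using Pn[of i] stake_last[of "2*i" q] by simp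
      qed
      then show ?thesis using bq by simp
    qed
    ultimately show ?thesis unfolding BJ using inN' inE' by blast
  qed
  show ?thesis unfolding TF
  proof
    show "BJ (N', E', last) [Fact x] \<subseteq> fseq ` maxp R \<tau> x"
    proof
      fix b assume "b \<in> BJ (N', E', last) [Fact x]"
      then consider (fin) p where "b = BFin (map last p)" "p \<noteq> []" "hd p = [Fact x]" "set p \<subseteq> N'"
          "\<forall>i < length p - 1. (p ! i, p ! Suc i) \<in> E'" "\<not> (\<exists>m \<in> N'. (last p, m) \<in> E')"
        | (inf) P where "b = BInf (smap last P)" "shd P = [Fact x]" "\<forall>i. P !! i \<in> N' \<and> (P !! i, P !! Suc i) \<in> E'"
        unfolding BJ by blast
      then show "b \<in> fseq ` maxp R \<tau> x"
      proof cases
        case fin then show ?thesis using sub1 by simp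
      next
        case inf then show ?thesis using sub3 by simp
      qed
    qed
  next
    show "fseq ` maxp R \<tau> x \<subseteq> BJ (N', E', last) [Fact x]"
    proof
      fix c assume "c \<in> fseq ` maxp R \<tau> x"
      then obtain b where b: "b \<in> maxp R \<tau> x" "c = fseq b" by blast
      show "c \<in> BJ (N', E', last) [Fact x]"
      proof (cases b)
        case (BFin q) then show ?thesis using sub2[OF b(1)] b(2) by blast
      next
        case (BInf q) then show ?thesis using sub4[OF b(1)] b(2) by blast
      qed
    qed
  qed
qed



lemma pos_gen:
  assumes "positional_strategy R PlF g"
  shows "pos_to_gen g \<in> gen_strategies R PlF"
  unfolding gen_strategies_def
proof (intro CollectI allI impI)
  fix p assume p: "is_fin_path R p \<and> owner (last p) = PlF \<and> has_succ R (last p)"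
  then have ne: "p \<noteq> []" unfolding is_fin_path_def by simp
  have "is_state R (last p)" using fin_path_state[of R p "length p - 1"] p ne by (simp add: last_conv_nth)
  then show "gedge R (last p) (pos_to_gen g p)" using assms p unfolding positional_strategy_def pos_to_gen_def by blast
qed

lemma pos_edge:
  assumes "positional_strategy R PlF g" "just_frame neg lit Fd R" "(y, A) \<in> R"
  shows "gedge R (Rule y A) (g (Rule y A))"
  using assms has_succ_Rule[OF assms(2,3)] unfolding positional_strategy_def by (simp add: is_state_def)

definition hseq :: "(nat \<Rightarrow> 'f state) \<Rightarrow> (nat \<Rightarrow> 'f set) \<Rightarrow> nat \<Rightarrow> 'f state" where
  "hseq P A j = (if even j then P (j div 2) else Rule (fact_of (P (j div 2))) (A (j div 2)))"

lemma hseq_even[simp]: "hseq P A (2*i) = P i" unfolding hseq_def by simp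
lemma hseq_odd[simp]: "hseq P A (Suc (2*i)) = Rule (fact_of (P i)) (A i)" unfolding hseq_def by simp

lemma hseq_edge:
  assumes g: "positional_strategy R PlF g" and jf: "just_frame neg lit Fd R"
    and st: "is_fact (P (j div 2))" "(fact_of (P (j div 2)), A (j div 2)) \<in> R"
      "P (Suc (j div 2)) = g (Rule (fact_of (P (j div 2))) (A (j div 2)))"
  shows "gedge R (hseq P A j) (hseq P A (Suc j))"
proof (cases "even j")
  case True
  define i where "i = j div 2"
  have j: "j = 2*i" using True i_def by presburger
  then have i: "j div 2 = i" by simp
  have fi: "is_fact (P i)" using st(1) i by simp
  obtain y where y: "P i = Fact y" using fi by (cases "P i") auto
  have h1: "hseq P A j = Fact y" using j y by simp
  have h2: "hseq P A (Suc j) = Rule y (A i)" using j y by simp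
  show ?thesis unfolding h1 h2 using st(2) i y by simp
next
  case False
  define i where "i = j div 2"
  have j: "j = Suc (2*i)" using False i_def by presburger
  then have i: "j div 2 = i" by simp
  have h2: "hseq P A (Suc j) = P (Suc i)" unfolding hseq_def using j by simp
  have h1: "hseq P A j = Rule (fact_of (P i)) (A i)" using j by simp
  show ?thesis unfolding h1 h2 using st(2,3) i pos_edge[OF g jf] by simp
qed

lemma graph_filter_E:
  assumes g: "positional_strategy R PlF g" and jf: "just_frame neg lit Fd R"
    and FR: "filter_rules (play_graph R PlF g x) = (N', E', lab)"
  shows "lab = id"
    and "n \<in> N' \<longleftrightarrow> is_fact n \<and> (\<exists>p \<in> cons_paths_from R PlF (pos_to_gen g) x. n \<in> set p)"
    and "(n, m) \<in> E' \<longleftrightarrow> (\<exists>p \<in> cons_paths_from R PlF (pos_to_gen g) x. n \<in> set p) \<and>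
            (\<exists>y A. n = Fact y \<and> (y, A) \<in> R \<and> m = g (Rule y A))"
    and "(n, m) \<in> E' \<Longrightarrow> m \<in> N'"
proof -
  define C where "C = cons_paths_from R PlF (pos_to_gen g) x"
  define N where "N = {s. \<exists>p \<in> C. s \<in> set p}"
  define E where "E = {(s, s'). \<exists>p \<in> C. \<exists>i < length p - 1. p ! i = s \<and> p ! Suc i = s'}"
  have PG: "play_graph R PlF g x = (N, E, id)" unfolding play_graph_def N_def E_def C_def ..
  have FR2: "filter_rules (N, E, id) = ({n \<in> N. is_fact n},
      {(n, m). n \<in> {n \<in> N. is_fact n} \<and> m \<in> {n \<in> N. is_fact n} \<and>
              ((n, m) \<in> E \<or> (\<exists>k \<in> N. \<not> is_fact k \<and> (n, k) \<in> E \<and> (k, m) \<in> E))}, id)"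
    unfolding filter_rules_def Let_def by simp
  have eqs: "N' = {n \<in> N. is_fact n}" "lab = id"
     "E' = {(n, m). n \<in> {n \<in> N. is_fact n} \<and> m \<in> {n \<in> N. is_fact n} \<and>
              ((n, m) \<in> E \<or> (\<exists>k \<in> N. \<not> is_fact k \<and> (n, k) \<in> E \<and> (k, m) \<in> E))}"
  proof -
    have T: "(N', E', lab) = ({n \<in> N. is_fact n},
      {(n, m). n \<in> {n \<in> N. is_fact n} \<and> m \<in> {n \<in> N. is_fact n} \<and>
              ((n, m) \<in> E \<or> (\<exists>k \<in> N. \<not> is_fact k \<and> (n, k) \<in> E \<and> (k, m) \<in> E))}, id)"
      using FR unfolding PG FR2 by (rule sym)
    show "N' = {n \<in> N. is_fact n}" "lab = id"
     "E' = {(n, m). n \<in> {n \<in> N. is_fact n} \<and> m \<in> {n \<in> N. is_fact n} \<and>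
              ((n, m) \<in> E \<or> (\<exists>k \<in> N. \<not> is_fact k \<and> (n, k) \<in> E \<and> (k, m) \<in> E))}"
      using T[unfolded prod.inject] by blast+
  qed
  show "lab = id" by (rule eqs(2))
  show "(n, m) \<in> E' \<Longrightarrow> m \<in> N'" unfolding eqs(1,3) by blast
  show "n \<in> N' \<longleftrightarrow> is_fact n \<and> (\<exists>p \<in> cons_paths_from R PlF (pos_to_gen g) x. n \<in> set p)"
    unfolding eqs(1) N_def C_def by blast
  have rho: "pos_to_gen g \<in> gen_strategies R PlF" by (rule pos_gen[OF g])
  have Egedge: "gedge R s s'" if a: "(s, s') \<in> E" for s s'
  proof -
    obtain p i where "p \<in> C" "i < length p - 1" "p ! i = s" "p ! Suc i = s'" using a unfolding E_def by blast
    then show ?thesis unfolding C_def in_C is_fin_path_def by blast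
  qed
  show "(n, m) \<in> E' \<longleftrightarrow> (\<exists>p \<in> cons_paths_from R PlF (pos_to_gen g) x. n \<in> set p) \<and>
            (\<exists>y A. n = Fact y \<and> (y, A) \<in> R \<and> m = g (Rule y A))"
  proof
    assume A: "(n, m) \<in> E'"
    then have nN: "n \<in> N" "is_fact n" "m \<in> N" "is_fact m"
      and EE: "(n, m) \<in> E \<or> (\<exists>k \<in> N. \<not> is_fact k \<and> (n, k) \<in> E \<and> (k, m) \<in> E)"
      unfolding eqs(3) by auto
    have "\<not> (n, m) \<in> E"
    proof
      assume "(n, m) \<in> E"
      then have "gedge R n m" by (rule Egedge)
      then show False using gedge_flip nN by blast
    qed
    then obtain k where k: "\<not> is_fact k" "(n, k) \<in> E" "(k, m) \<in> E" using EE by blast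
    have "gedge R n k" using k(2) by (rule Egedge)
    then obtain y A where yA: "n = Fact y" "k = Rule y A" "(y, A) \<in> R"
      using gedge_cases nN(2) k(1) by (metis is_fact.simps(2))
    obtain p i where pi: "p \<in> C" "i < length p - 1" "p ! i = k" "p ! Suc i = m" using k(3) unfolding E_def by blast
    have "owner (p ! i) = PlF" using pi(3) yA by simp
    then have "pos_to_gen g (take (Suc i) p) = p ! Suc i" using pi unfolding C_def in_C cons_fin_def by blast
    moreover have "last (take (Suc i) p) = p ! i" using pi(2) by (simp add: last_take_Suc)
    ultimately have "m = g k" using pi unfolding pos_to_gen_def by simp
    then show "(\<exists>p \<in> cons_paths_from R PlF (pos_to_gen g) x. n \<in> set p) \<and>
            (\<exists>y A. n = Fact y \<and> (y, A) \<in> R \<and> m = g (Rule y A))"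
      using nN(1) yA unfolding N_def C_def by blast
  next
    assume A: "(\<exists>p \<in> cons_paths_from R PlF (pos_to_gen g) x. n \<in> set p) \<and>
            (\<exists>y A. n = Fact y \<and> (y, A) \<in> R \<and> m = g (Rule y A))"
    then obtain p y A where p: "p \<in> C" "n \<in> set p" and yA: "n = Fact y" "(y, A) \<in> R" "m = g (Rule y A)"
      unfolding C_def by blast
    obtain i where i: "i < length p" "p ! i = n" using p(2) by (metis in_set_conv_nth)
    define p0 where "p0 = take (Suc i) p"
    have p0C: "p0 \<in> C" unfolding p0_def C_def using C_take[of p R PlF "pos_to_gen g" x "Suc i"] p(1) C_def by simp
    have l0: "last p0 = Fact y" unfolding p0_def using i yA by (simp add: last_take_Suc)
    define p1 where "p1 = p0 @ [Rule y A, pos_to_gen g (p0 @ [Rule y A])]"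
    have p1C: "p1 \<in> C" unfolding p1_def C_def using C_extend[OF jf rho _ l0 yA(2)] p0C C_def by blast
    have p1m: "pos_to_gen g (p0 @ [Rule y A]) = m" using yA unfolding pos_to_gen_def by simp
    have p0ne: "p0 \<noteq> []" unfolding p0_def using i(1) by (cases p) auto
    define L where "L = length p0"
    have L0: "0 < L" using p0ne L_def by simp
    have lp1: "length p1 = L + 2" unfolding p1_def L_def by simp
    have n1: "p1 ! (L - 1) = n" unfolding p1_def L_def using p0ne l0 yA(1) by (simp add: nth_append last_conv_nth)
    have n2: "p1 ! Suc (L - 1) = Rule y A" unfolding p1_def L_def using p0ne by (simp add: nth_append)
    have n3: "p1 ! Suc (Suc (L - 1)) = m" unfolding p1_def L_def using p0ne p1m by (simp add: nth_append)
    have i1: "L - 1 < length p1 - 1" "Suc (L - 1) < length p1 - 1" using lp1 L0 by simp_all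
    have e1: "(n, Rule y A) \<in> E" unfolding E_def using p1C n1 n2 i1(1) by blast
    have e2: "(Rule y A, m) \<in> E" unfolding E_def using p1C n2 n3 i1(2) by blast
    have "Rule y A \<in> set p1" using n2 i1(2) nth_mem[of "Suc (L - 1)" p1] by simp
    then have kN: "Rule y A \<in> N" unfolding N_def using p1C by blast
    have nN: "n \<in> N" unfolding N_def using p by blast
    have "Suc (Suc (L - 1)) < length p1" using lp1 L0 by simp
    then have "m \<in> set p1" using n3 nth_mem[of "Suc (Suc (L - 1))" p1] by simp
    then have mN: "m \<in> N" unfolding N_def using p1C by blast
    have mf: "is_fact m" using gedge_flip[OF pos_edge[OF g jf yA(2)]] yA(3) by simp
    have ex: "\<exists>k \<in> N. \<not> is_fact k \<and> (n, k) \<in> E \<and> (k, m) \<in> E"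
      using kN e1 e2 by (intro bexI[of _ "Rule y A"]) simp_all
    show "(n, m) \<in> E'" unfolding eqs(3) using nN mN mf yA(1) ex by simp
  qed
qed



lemma BJ_graph:
  assumes g: "positional_strategy R PlF g" and jf: "just_frame neg lit Fd R"
  shows "BJ (filter_rules (play_graph R PlF g x)) (Fact x) = fseq ` maxp R (pos_to_gen g) x"
proof -
  obtain N' E' lab where FR: "filter_rules (play_graph R PlF g x) = (N', E', lab)" by (metis prod_cases3)
  define \<rho> where "\<rho> = pos_to_gen g"
  define C where "C = cons_paths_from R PlF \<rho> x"
  have rho: "\<rho> \<in> gen_strategies R PlF" unfolding \<rho>_def by (rule pos_gen[OF g])
  have lab: "lab = id" using graph_filter_E(1)[OF g jf FR] .
  have inN: "n \<in> N' \<longleftrightarrow> is_fact n \<and> (\<exists>p \<in> C. n \<in> set p)" for n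
    using graph_filter_E(2)[OF g jf FR] unfolding C_def \<rho>_def .
  have inE: "(n, m) \<in> E' \<longleftrightarrow> (\<exists>p \<in> C. n \<in> set p) \<and> (\<exists>y A. n = Fact y \<and> (y, A) \<in> R \<and> m = g (Rule y A))" for n m
    using graph_filter_E(3)[OF g jf FR] unfolding C_def \<rho>_def .
  have EN: "(n, m) \<in> E' \<Longrightarrow> m \<in> N'" for n m using graph_filter_E(4)[OF g jf FR] .
  have rhoeq: "\<rho> p = g (last p)" for p unfolding \<rho>_def pos_to_gen_def ..
  have BJ: "BJ (N', E', lab) (Fact x) =
     {BFin p | p. p \<noteq> [] \<and> hd p = Fact x \<and> set p \<subseteq> N' \<and>
        (\<forall>i < length p - 1. (p ! i, p ! Suc i) \<in> E') \<and> \<not> (\<exists>m \<in> N'. (last p, m) \<in> E')}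
   \<union> {BInf p | p. shd p = Fact x \<and> (\<forall>i. p !! i \<in> N' \<and> (p !! i, p !! Suc i) \<in> E')}"
    unfolding BJ_def lab prod.case list.map_id stream.map_id ..
  have choice: "is_fact n \<and> (fact_of n, SOME A. (fact_of n, A) \<in> R \<and> m = g (Rule (fact_of n) A)) \<in> R \<and>
        m = g (Rule (fact_of n) (SOME A. (fact_of n, A) \<in> R \<and> m = g (Rule (fact_of n) A)))"
    if a: "(n, m) \<in> E'" for n m
  proof -
    obtain y A where yA: "n = Fact y" "(y, A) \<in> R" "m = g (Rule y A)" using a unfolding inE by blast
    then have ex: "\<exists>A. (fact_of n, A) \<in> R \<and> m = g (Rule (fact_of n) A)" by auto
    have "(fact_of n, SOME A. (fact_of n, A) \<in> R \<and> m = g (Rule (fact_of n) A)) \<in> R \<and>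
        m = g (Rule (fact_of n) (SOME A. (fact_of n, A) \<in> R \<and> m = g (Rule (fact_of n) A)))"
      using someI_ex[OF ex] .
    then show ?thesis using yA(1) by simp
  qed
  define Ach where "Ach n m = (SOME A. (fact_of n, A) \<in> R \<and> m = g (Rule (fact_of n) A))" for n m
  have sub1: "BFin p \<in> fseq ` maxp R \<rho> x"
    if p: "p \<noteq> []" "hd p = Fact x" "set p \<subseteq> N'" "\<forall>i < length p - 1. (p ! i, p ! Suc i) \<in> E'"
       "\<not> (\<exists>m \<in> N'. (last p, m) \<in> E')" for p
  proof -
    define L where "L = length p"
    have L0: "0 < L" using p(1) L_def by simp
    define A where "A i = Ach (p!i) (p!Suc i)" for i
    have st: "is_fact (p!i) \<and> (fact_of (p!i), A i) \<in> R \<and> p!Suc i = g (Rule (fact_of (p!i)) (A i))"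
      if "i < L - 1" for i
    proof -
      have e: "(p!i, p!Suc i) \<in> E'" using p(4) that L_def by simp
      show ?thesis unfolding A_def Ach_def by (rule choice[OF e])
    qed
    define q where "q = map (hseq (\<lambda>i. p!i) A) [0..<2*L-1]"
    have lq: "length q = 2*L-1" unfolding q_def by simp
    have qn: "q ! j = hseq (\<lambda>i. p!i) A j" if "j < 2*L-1" for j using that unfolding q_def by simp
    have pf: "is_fact (p!i)" if "i < L" for i
    proof -
      have "p!i \<in> N'" using p(3) nth_mem[of i p] that L_def by auto
      then show ?thesis unfolding inN by simp
    qed
    have q0: "q ! 0 = Fact x" using qn[of 0] L0 p(1,2) by (simp add: hd_conv_nth hseq_def)
    have qne: "q \<noteq> []" using lq L0 by auto
    have edges: "gedge R (q ! j) (q ! Suc j)" if j: "j < length q - 1" for j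
    proof -
      have jd: "j div 2 < L - 1" using j lq by simp
      have "gedge R (hseq (\<lambda>i. p!i) A j) (hseq (\<lambda>i. p!i) A (Suc j))"
        using st[OF jd] by (intro hseq_edge[OF g jf]) simp_all
      then show ?thesis using qn j lq by simp
    qed
    have fp: "is_fin_path R q" unfolding is_fin_path_def using qne q0 edges
      by (simp add: hd_conv_nth is_state_def)
    have cf: "cons_fin PlF \<rho> q" unfolding cons_fin_def
    proof (intro allI impI)
      fix j assume j: "j < length q - 1" and o: "owner (q ! j) = PlF"
      have jd: "j div 2 < L - 1" using j lq by simp
      have "odd j"
      proof
        assume "even j"
        then have "q ! j = p ! (j div 2)" using qn j lq unfolding hseq_def by simp
        moreover have "is_fact (p ! (j div 2))" using pf jd by simp
        ultimately show False using o by (simp add: owner_F)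
      qed
      define i where "i = j div 2"
      have ji: "j = Suc (2*i)" using \<open>odd j\<close> i_def by presburger
      have idiv: "j div 2 = i" using ji by simp
      have "\<rho> (take (Suc j) q) = g (q ! j)" unfolding rhoeq using j by (simp add: last_take_Suc)
      also have "q ! j = Rule (fact_of (p!i)) (A i)" using qn j lq ji by simp
      also have "g \<dots> = p ! Suc i" using st jd idiv by simp
      also have "\<dots> = q ! Suc j" using qn[of "Suc j"] j lq ji unfolding hseq_def by simp
      finally show "\<rho> (take (Suc j) q) = q ! Suc j" .
    qed
    have lastq: "last q = last p"
    proof -
      have ix: "length q - 1 = 2*(L-1)" using lq L0 by simp
      have "last q = q ! (2*(L-1))" using qne ix by (simp add: last_conv_nth)
      also have "\<dots> = p ! (L-1)" using qn[of "2*(L-1)"] L0 by simp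
      finally show ?thesis using p(1) L_def by (simp add: last_conv_nth)
    qed
    have ns: "\<not> has_succ R (last q)"
    proof
      assume hs: "has_succ R (last q)"
      have lpN: "last p \<in> N'" using p(1,3) by auto
      have lpf: "is_fact (last p)" and Nr: "\<exists>p'\<in>C. last p \<in> set p'" using lpN unfolding inN by simp_all
      obtain y where y: "last p = Fact y" using lpf by (cases "last p") auto
      then have "y \<in> Fd" using hs lastq has_succ_Fact[OF jf] by simp
      then obtain B where yB: "(y, B) \<in> R" using jf unfolding just_frame_def by blast
      have e: "(last p, g (Rule y B)) \<in> E'" unfolding inE using Nr y yB by blast
      have "g (Rule y B) \<in> N'" by (rule EN[OF e])
      then show False using p(5) e by blast
    qed
    have qm: "BFin q \<in> maxp R \<rho> x" using fp cf ns q0 qne by (simp add: maxp_BFin hd_conv_nth)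
    have "map (\<lambda>i. q!(2*i)) [0..<Suc (length q div 2)] = p"
    proof (rule nth_equalityI)
      have "Suc (length q div 2) = L" using lq L0 by presburger
      then show "length (map (\<lambda>i. q!(2*i)) [0..<Suc (length q div 2)]) = length p" using L_def by simp
    next
      fix i assume "i < length (map (\<lambda>i. q!(2*i)) [0..<Suc (length q div 2)])"
      have LL: "Suc (length q div 2) = L" using lq L0 by presburger
      then have i: "i < L" using \<open>i < length _\<close> by simp
      have "Suc (length q div 2) = L" by (rule LL)
      then have "map (\<lambda>i. q!(2*i)) [0..<Suc (length q div 2)] ! i = q ! (2*i)" using i by simp
      also have "\<dots> = p ! i" using qn[of "2*i"] i by simp
      finally show "map (\<lambda>i. q!(2*i)) [0..<Suc (length q div 2)] ! i = p ! i" .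
    qed
    then have "fseq (BFin q) = BFin p" by simp
    then show ?thesis using qm by (metis image_eqI)
  qed
  have edge_from_path: "(a, c) \<in> E'"
    if Nr: "\<exists>p'\<in>C. a \<in> set p'" and fa: "is_fact a" and e1: "gedge R a r" and ow: "g r = c" for a r c
  proof -
    obtain y where y: "a = Fact y" using fa by (cases a) auto
    obtain y' A where yA: "r = Rule y' A" "(y', A) \<in> R" "y' = y" using e1 y by (cases r) auto
    show ?thesis unfolding inE using Nr y yA ow by blast
  qed
  have sub2: "fseq b \<in> BJ (N', E', lab) (Fact x)" if b: "b \<in> maxp R \<rho> x" "b = BFin q" for b q
  proof -
    have Q: "is_fin_path R q" "hd q = Fact x" "\<not> has_succ R (last q)" "cons_fin PlF \<rho> q"
      using b by (simp_all add: maxp_BFin)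
    have qC: "q \<in> C" unfolding C_def in_C using Q by simp
    have qne: "q \<noteq> []" using Q unfolding is_fin_path_def by simp
    have o: "odd (length q)" using fin_max_odd[OF jf Q(1-3)] .
    define k where "k = length q div 2"
    have lq: "length q = 2*k+1" using o k_def by presburger
    define p where "p = map (\<lambda>i. q!(2*i)) [0..<Suc k]"
    have lp: "length p = Suc k" unfolding p_def by simp
    have pn: "p ! i = q ! (2*i)" if "i < Suc k" for i unfolding p_def using that by (simp del: upt_Suc)
    have pne: "p \<noteq> []" using lp by auto
    have hp: "hd p = Fact x" using pn[of 0] pne Q(2) qne by (simp add: hd_conv_nth)
    have inq: "\<exists>p'\<in>C. q ! j \<in> set p'" if "j < length q" for j using qC nth_mem[OF that] by blast
    have fq: "is_fact (q ! (2*i))" if "i < Suc k" for i using fin_path_alt[OF Q(1,2), of "2*i"] that lq by simp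
    have pN: "set p \<subseteq> N'"
    proof
      fix n assume "n \<in> set p"
      then obtain i where i: "i < Suc k" "n = p ! i" using lp by (metis in_set_conv_nth)
      show "n \<in> N'" unfolding inN using i pn fq inq[of "2*i"] lq by simp
    qed
    have pE: "\<forall>i < length p - 1. (p ! i, p ! Suc i) \<in> E'"
    proof (intro allI impI)
      fix i assume "i < length p - 1"
      then have i: "i < k" using lp by simp
      have e1: "gedge R (q ! (2*i)) (q ! Suc (2*i))" using Q(1) i lq unfolding is_fin_path_def by simp
      have "\<not> is_fact (q ! Suc (2*i))" using gedge_flip[OF e1] fq[of i] i by simp
      then have "owner (q ! Suc (2*i)) = PlF" by (simp add: owner_F)
      then have "\<rho> (take (Suc (Suc (2*i))) q) = q ! Suc (Suc (2*i))" using Q(4) i lq unfolding cons_fin_def by simp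
      then have "g (q ! Suc (2*i)) = q ! (2 * Suc i)" unfolding rhoeq using i lq by (simp add: last_take_Suc)
      then have "(q ! (2*i), q ! (2 * Suc i)) \<in> E'"
        using edge_from_path[OF inq[of "2*i"] fq[of i] e1] i lq by simp
      then show "(p ! i, p ! Suc i) \<in> E'" using pn[of i] pn[of "Suc i"] i by simp
    qed
    have "last p = p ! k" using lp pne by (simp add: last_conv_nth)
    also have "\<dots> = q ! (2*k)" using pn[of k] by simp
    also have "\<dots> = last q" using lq qne by (simp add: last_conv_nth)
    finally have lastp: "last p = last q" .
    have pmax: "\<not> (\<exists>m \<in> N'. (last p, m) \<in> E')"
    proof
      assume "\<exists>m \<in> N'. (last p, m) \<in> E'"
      then obtain m where "(last q, m) \<in> E'" using lastp by auto
      then obtain y A where yA: "last q = Fact y" "(y, A) \<in> R" unfolding inE by blast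
      then have "gedge R (last q) (Rule y A)" by simp
      then have "has_succ R (last q)" unfolding has_succ_def by (rule exI)
      then show False using Q(3) by simp
    qed
    have "fseq b = BFin p" unfolding b(2) p_def k_def by simp
    then show ?thesis unfolding BJ using pne hp pN pE pmax by blast
  qed
  have sub3: "BInf P \<in> fseq ` maxp R \<rho> x"
    if P: "shd P = Fact x" "\<forall>i. P !! i \<in> N' \<and> (P !! i, P !! Suc i) \<in> E'" for P
  proof -
    define A where "A i = Ach (P!!i) (P!!Suc i)" for i
    have st: "is_fact (P!!i) \<and> (fact_of (P!!i), A i) \<in> R \<and> P!!Suc i = g (Rule (fact_of (P!!i)) (A i))" for i
    proof -
      have e: "(P!!i, P!!Suc i) \<in> E'" using P(2) by simp
      show ?thesis unfolding A_def Ach_def by (rule choice[OF e])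
    qed
    define q where "q = smap (hseq (\<lambda>i. P!!i) A) nats"
    have qn: "q !! j = hseq (\<lambda>i. P!!i) A j" for j unfolding q_def by simp
    have q0: "shd q = Fact x" using qn[of 0] P(1) by (simp add: hseq_def)
    have edges: "gedge R (q !! j) (q !! Suc j)" for j
    proof -
      have "gedge R (hseq (\<lambda>i. P!!i) A j) (hseq (\<lambda>i. P!!i) A (Suc j))"
        using st[of "j div 2"] by (intro hseq_edge[OF g jf]) simp_all
      then show ?thesis unfolding qn .
    qed
    have ci: "cons_inf PlF \<rho> q" unfolding cons_inf_def
    proof (intro allI impI)
      fix j assume o: "owner (q !! j) = PlF"
      have "odd j"
      proof
        assume "even j"
        then have "q !! j = P !! (j div 2)" using qn unfolding hseq_def by simp
        moreover have "is_fact (P !! (j div 2))" using st by simp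
        ultimately show False using o by (simp add: owner_F)
      qed
      define i where "i = j div 2"
      have ji: "j = Suc (2*i)" using \<open>odd j\<close> i_def by presburger
      have "\<rho> (stake (Suc j) q) = g (q !! j)" unfolding rhoeq by (simp only: stake_last)
      also have "q !! j = Rule (fact_of (P!!i)) (A i)" unfolding qn ji by simp
      also have "g \<dots> = P !! Suc i" using st by simp
      also have "\<dots> = q !! Suc j" unfolding qn using ji by (simp add: hseq_def)
      finally show "\<rho> (stake (Suc j) q) = q !! Suc j" .
    qed
    have qm: "BInf q \<in> maxp R \<rho> x" using q0 edges ci by (simp add: maxp_BInf)
    have "smap (\<lambda>i. q!!(2*i)) nats = P"
      by (rule stream_ext) (simp add: qn)
    then have "fseq (BInf q) = BInf P" by simp
    then show ?thesis using qm by (metis image_eqI)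
  qed
  have sub4: "fseq b \<in> BJ (N', E', lab) (Fact x)" if b: "b \<in> maxp R \<rho> x" "b = BInf q" for b q
  proof -
    have bm: "BInf q \<in> maxp R \<rho> x" using b by simp
    have Q: "shd q = Fact x" "\<forall>i. gedge R (q !! i) (q !! Suc i)" "cons_inf PlF \<rho> q"
      using bm by (simp_all add: maxp_BInf)
    define P where "P = smap (\<lambda>i. q!!(2*i)) nats"
    have Pn: "P !! i = q !! (2*i)" for i unfolding P_def by simp
    have inq: "\<exists>p'\<in>C. q !! j \<in> set p'" for j
    proof -
      have "stake (Suc j) q \<in> C" unfolding C_def by (rule maxp_stake_C[OF bm])
      moreover have "q !! j \<in> set (stake (Suc j) q)" using stake_last[of j q]
        by (metis last_in_set stake_invert_Nil nat.distinct(1))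
      ultimately show ?thesis by blast
    qed
    have fq: "is_fact (q !! (2*i))" for i using inf_alt[OF Q(1,2)] by simp
    have PN: "P !! i \<in> N'" for i unfolding inN Pn using fq inq by simp
    have PE: "(P !! i, P !! Suc i) \<in> E'" for i
    proof -
      have e1: "gedge R (q !! (2*i)) (q !! Suc (2*i))" using Q(2) by simp
      have "\<not> is_fact (q !! Suc (2*i))" using gedge_flip[OF e1] fq[of i] by simp
      then have "owner (q !! Suc (2*i)) = PlF" by (simp add: owner_F)
      then have "\<rho> (stake (Suc (Suc (2*i))) q) = q !! Suc (Suc (2*i))" using Q(3) unfolding cons_inf_def by blast
      then have "g (q !! Suc (2*i)) = q !! (2 * Suc i)" unfolding rhoeq stake_last by simp
      then have "(q !! (2*i), q !! (2 * Suc i)) \<in> E'"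
        using edge_from_path[OF inq[of "2*i"] fq[of i] e1] by simp
      then show ?thesis unfolding Pn .
    qed
    have "shd P = Fact x" using Pn[of 0] Q(1) by simp
    moreover have "fseq b = BInf P" unfolding b(2) P_def by simp
    ultimately show ?thesis unfolding BJ using PN PE by blast
  qed
  show ?thesis unfolding FR \<rho>_def[symmetric]
  proof
    show "BJ (N', E', lab) (Fact x) \<subseteq> fseq ` maxp R \<rho> x"
    proof
      fix b assume "b \<in> BJ (N', E', lab) (Fact x)"
      then consider (fin) p where "b = BFin p" "p \<noteq> []" "hd p = Fact x" "set p \<subseteq> N'"
          "\<forall>i < length p - 1. (p ! i, p ! Suc i) \<in> E'" "\<not> (\<exists>m \<in> N'. (last p, m) \<in> E')"
        | (inf) P where "b = BInf P" "shd P = Fact x" "\<forall>i. P !! i \<in> N' \<and> (P !! i, P !! Suc i) \<in> E'"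
        unfolding BJ by blast
      then show "b \<in> fseq ` maxp R \<rho> x"
      proof cases
        case fin then show ?thesis using sub1 by simp
      next
        case inf then show ?thesis using sub3 by simp
      qed
    qed
  next
    show "fseq ` maxp R \<rho> x \<subseteq> BJ (N', E', lab) (Fact x)"
    proof
      fix c assume "c \<in> fseq ` maxp R \<rho> x"
      then obtain b where b: "b \<in> maxp R \<rho> x" "c = fseq b" by blast
      show "c \<in> BJ (N', E', lab) (Fact x)"
      proof (cases b)
        case (BFin q) then show ?thesis using sub2[OF b(1)] b(2) by blast
      next
        case (BInf q) then show ?thesis using sub4[OF b(1)] b(2) by blast
      qed
    qed
  qed
qed



lemma BJ_neg:
  assumes jf: "just_frame neg lit Fd R" and BJ0: "BJ J0 n = fseq ` maxp R \<tau> x"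
  shows "BJ (neg_labels neg J0) n = (\<lambda>b. bmap neg (del_rules b)) ` maxp R \<tau> x"
proof -
  obtain N E lab where J0: "J0 = (N, E, lab)" by (metis prod_cases3)
  have NL: "neg_labels neg J0 = (N, E, \<lambda>m. (\<lambda>s. neg (fact_of s)) (lab m))"
    unfolding J0 neg_labels_def by simp
  have "BJ (neg_labels neg J0) n = bmap (\<lambda>s. neg (fact_of s)) ` BJ J0 n"
    unfolding NL unfolding J0 by (rule BJ_relabel)
  also have "\<dots> = bmap (\<lambda>s. neg (fact_of s)) ` fseq ` maxp R \<tau> x" unfolding BJ0 ..
  also have "\<dots> = (\<lambda>b. bmap neg (del_rules b)) ` maxp R \<tau> x"
    unfolding image_image
  proof (rule image_cong[OF refl])
    fix b assume "b \<in> maxp R \<tau> x"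
    then have "del_rules b = bmap fact_of (fseq b)" by (rule del_fseq[OF jf])
    then show "bmap (\<lambda>s. neg (fact_of s)) (fseq b) = bmap neg (del_rules b)"
      by (simp add: bmap_comp o_def)
  qed
  finally show ?thesis .
qed

theorem mainTheorem8:
  fixes neg :: "'f \<Rightarrow> 'f" and lit :: "tv \<Rightarrow> 'f" and Fd :: "'f set"
    and R :: "('f \<times> 'f set) set" and B :: "'f branch \<Rightarrow> 'f" and x :: 'f
  assumes "fact_space neg lit"
    and "just_frame neg lit Fd R"
    and "complementary neg Fd R"
    and "consistent_be neg Fd B"
    and "x \<in> Fd"
  shows "(\<forall>g I. positional_strategy R PlF g \<and> is_interp neg lit I \<longrightarrow>
            val (J_pos neg R g x) (Fact x) B I =
            tv_neg (tv_Sup {u R B I x \<sigma> (pos_to_gen g) | \<sigma>. \<sigma> \<in> gen_strategies R PlT}))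
       \<and> (\<forall>\<tau> I. \<tau> \<in> gen_strategies R PlF \<and> is_interp neg lit I \<longrightarrow>
            val (J_gen neg R \<tau> x) [Fact x] B I =
            tv_neg (tv_Sup {u R B I x \<sigma> \<tau> | \<sigma>. \<sigma> \<in> gen_strategies R PlT}))"
proof (intro conjI allI impI)
  fix g I assume a: "positional_strategy R PlF g \<and> is_interp neg lit I"
  have g: "positional_strategy R PlF g" and I: "is_interp neg lit I" using a by simp_all
  have rho: "pos_to_gen g \<in> gen_strategies R PlF" by (rule pos_gen[OF g])
  have bg: "BJ (filter_rules (play_graph R PlF g x)) (Fact x) = fseq ` maxp R (pos_to_gen g) x"
    by (rule BJ_graph[OF g assms(2)])
  have "BJ (J_pos neg R g x) (Fact x) = (\<lambda>b. bmap neg (del_rules b)) ` maxp R (pos_to_gen g) x"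
    unfolding J_pos_def by (rule BJ_neg[OF assms(2) bg])
  then show "val (J_pos neg R g x) (Fact x) B I =
            tv_neg (tv_Sup {u R B I x \<sigma> (pos_to_gen g) | \<sigma>. \<sigma> \<in> gen_strategies R PlT})"
    by (rule final_val[OF assms(2,5,4) I rho])
next
  fix \<tau> I assume a: "\<tau> \<in> gen_strategies R PlF \<and> is_interp neg lit I"
  have t: "\<tau> \<in> gen_strategies R PlF" and I: "is_interp neg lit I" using a by simp_all
  have bt: "BJ (filter_rules (play_tree R PlF \<tau> x)) [Fact x] = fseq ` maxp R \<tau> x"
    by (rule BJ_tree[OF assms(2) t])
  have "BJ (J_gen neg R \<tau> x) [Fact x] = (\<lambda>b. bmap neg (del_rules b)) ` maxp R \<tau> x"
    unfolding J_gen_def by (rule BJ_neg[OF assms(2) bt])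
  then show "val (J_gen neg R \<tau> x) [Fact x] B I =
            tv_neg (tv_Sup {u R B I x \<sigma> \<tau> | \<sigma>. \<sigma> \<in> gen_strategies R PlT})"
    by (rule final_val[OF assms(2,5,4) I t])
qed


end
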